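(* Let $f,g\in\mathcal B_1(2^\omega)$. If $|f|_\alpha<|g|_\alpha$ then $f\le_{\mathbf m} g$. If $|f|_\alpha=|g|_\alpha$, then $f\le_{\mathbf m} g$ if and only if at least one of the following holds: (1) $|f|_\alpha$ is a limit ordinal; (2) $g$ is two-sided; (3) $f$ is one-sided and $g$ is neither right-sided nor left-sided; (4) $f$ and $g$ are both right-sided, or both left-sided.
   Context: $\mathcal B_1(2^\omega)$ is the set of functions $2^\omega\to\mathbb R$ that are pointwise limits of sequences of continuous functions. Optimal derivation sequence: for $\mathcal C\subseteq\mathcal P(X)$, $X$ a compact metric space, define $P^0=X$, $P^{\nu+1}=P^\nu\setminus\bigcup\{U\subseteq X \text{ open}: P^\nu\cap U\subseteq C\text{ for some }C\in\mathcal C\}$, and $P^\lambda=\bigcap_{\nu<\lambda}P^\nu$ for limit $\lambda$. Bourgain rank: for $f\in\mathcal B_1(2^\omega)$, $p\in\mathbb Q$, $\varepsilon\in\mathbb Q^+$, let $P^\nu_{f,p,\varepsilon}$ be the optimal derivation sequence for $\{f^{-1}((-\infty,p+\varepsilon)),f^{-1}((p-\varepsilon,\infty))\}$, let $\alpha(f,p,\varepsilon)$ be the least $\nu$ with $P^\nu_{f,p,\varepsilon}=\emptyset$ (it exists and is a successor), and $|f|_\alpha=\sup_{p,\varepsilon}\alpha(f,p,\varepsilon)$. Sidedness: suppose $|f|_\alpha=\nu+1$. A pair $(p,\varepsilon)$ is maximal for $f$ if $\alpha(f,p,\varepsilon)=\nu+1$ and $f(P^\nu_{f,p,\varepsilon})\setminus(p-\varepsilon,p+\varepsilon)\ne\emptyset$.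 $f$ is two-sided if there is a maximal $(p,\varepsilon)$ with $f(P^\nu_{f,p,\varepsilon})\not\subseteq(p-\varepsilon,\infty)$ and $f(P^\nu_{f,p,\varepsilon})\not\subseteq(-\infty,p+\varepsilon)$; one-sided otherwise; left-sided if for every maximal $(p,\varepsilon)$, $f(P^\nu_{f,p,\varepsilon})\subseteq(-\infty,p+\varepsilon)$; right-sided if for every maximal $(p,\varepsilon)$, $f(P^\nu_{f,p,\varepsilon})\subseteq(p-\varepsilon,\infty)$. Questions: for $y\in\mathbb R$, $p\in\mathbb Q$, $\varepsilon\in\mathbb Q^+$, a bit $b\in\{0,1\}$ is a correct answer to "$y\lesssim_\varepsilon p$" if either $b=1$ and $y<p+\varepsilon$, or $b=0$ and $y>p-\varepsilon$. $f\le_{\mathbf m} g$ means: for every $p\in\mathbb Q,\varepsilon\in\mathbb Q^+$ there are $q\in\mathbb Q,\delta\in\mathbb Q^+$ and a continuous $k:2^\omega\to2^\omega$ such that for every $A\in2^\omega$, every correct answer to $g(k(A))\lesssim_\delta q$ is a correct answer to $f(A)\lesssim_\varepsilon p$. *)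

theory Defs
  imports "HOL-Analysis.Analysis"
begin

text \<open>Ordinals are modelled by the elements of
an arbitrary uncountable well-ordered type 'o (it contains an initial segment
of order type omega_1, which is all that is needed).\<close>

type_synonym cantor = "nat \<Rightarrow> bool"

definition baire1 :: "(cantor \<Rightarrow> real) \<Rightarrow> bool" where
  "baire1 f \<longleftrightarrow> (\<exists>fn :: nat \<Rightarrow> cantor \<Rightarrow> real.
      (\<forall>n. continuous_on UNIV (fn n)) \<and> (\<forall>x. (\<lambda>n. fn n x) \<longlonglongrightarrow> f x))"

text \<open>nu = mu + 1 in the well-order\<close>
definition is_succ_of :: "'o::wellorder \<Rightarrow> 'o \<Rightarrow> bool" where
  "is_succ_of \<mu> \<nu> \<longleftrightarrow> \<mu> < \<nu> \<and> (\<forall>\<eta><\<nu>. \<eta> \<le> \<mu>)"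

definition is_limit :: "'o::wellorder \<Rightarrow> bool" where
  "is_limit \<nu> \<longleftrightarrow> (\<exists>\<mu>. \<mu> < \<nu>) \<and> \<not> (\<exists>\<mu>. is_succ_of \<mu> \<nu>)"

definition deriv_step :: "cantor set set \<Rightarrow> cantor set \<Rightarrow> cantor set" where
  "deriv_step C P = P - \<Union>{U. open U \<and> (\<exists>c\<in>C. P \<inter> U \<subseteq> c)}"

text \<open>Optimal derivation sequence: P^0 = X (empty intersection), successor
steps apply deriv_step, limit steps intersect.\<close>
definition opt_deriv :: "cantor set set \<Rightarrow> 'o::wellorder \<Rightarrow> cantor set" where
  "opt_deriv C = wfrec {(x, y). x < y}
     (\<lambda>R \<nu>. if (\<exists>\<mu>. is_succ_of \<mu> \<nu>)
            then deriv_step C (R (THE \<mu>. is_succ_of \<mu> \<nu>))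
            else \<Inter> (R ` {\<mu>. \<mu> < \<nu>}))"

definition bfam :: "(cantor \<Rightarrow> real) \<Rightarrow> rat \<Rightarrow> rat \<Rightarrow> cantor set set" where
  "bfam f p \<epsilon> = {f -` {..< of_rat p + of_rat \<epsilon>}, f -` {of_rat p - of_rat \<epsilon> <..}}"

definition Pseq :: "(cantor \<Rightarrow> real) \<Rightarrow> rat \<Rightarrow> rat \<Rightarrow> 'o::wellorder \<Rightarrow> cantor set" where
  "Pseq f p \<epsilon> \<nu> = opt_deriv (bfam f p \<epsilon>) \<nu>"

definition alpha :: "(cantor \<Rightarrow> real) \<Rightarrow> rat \<Rightarrow> rat \<Rightarrow> 'o::wellorder" where
  "alpha f p \<epsilon> = (LEAST \<nu>. Pseq f p \<epsilon> \<nu> = {})"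

definition brank :: "(cantor \<Rightarrow> real) \<Rightarrow> 'o::wellorder" where
  "brank f = (LEAST \<nu>. \<forall>p \<epsilon>. \<epsilon> > 0 \<longrightarrow> alpha f p \<epsilon> \<le> \<nu>)"

definition maximal_pair :: "(cantor \<Rightarrow> real) \<Rightarrow> 'o::wellorder \<Rightarrow> rat \<Rightarrow> rat \<Rightarrow> bool" where
  "maximal_pair f \<nu> p \<epsilon> \<longleftrightarrow> \<epsilon> > 0 \<and> is_succ_of \<nu> (brank f) \<and> (alpha f p \<epsilon> :: 'o) = brank f \<and>
     f ` (Pseq f p \<epsilon> \<nu>) - {of_rat p - of_rat \<epsilon> <..< of_rat p + of_rat \<epsilon>} \<noteq> {}"

definition two_sided :: "'o::wellorder itself \<Rightarrow> (cantor \<Rightarrow> real) \<Rightarrow> bool" where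
  "two_sided (_::'o itself) f \<longleftrightarrow> (\<exists>(\<nu>::'o) p \<epsilon>. maximal_pair f \<nu> p \<epsilon> \<and>
     \<not> f ` (Pseq f p \<epsilon> \<nu>) \<subseteq> {of_rat p - of_rat \<epsilon> <..} \<and>
     \<not> f ` (Pseq f p \<epsilon> \<nu>) \<subseteq> {..< of_rat p + of_rat \<epsilon>})"

definition one_sided :: "'o::wellorder itself \<Rightarrow> (cantor \<Rightarrow> real) \<Rightarrow> bool" where
  "one_sided T f \<longleftrightarrow> \<not> two_sided T f"

definition left_sided :: "'o::wellorder itself \<Rightarrow> (cantor \<Rightarrow> real) \<Rightarrow> bool" where
  "left_sided (_::'o itself) f \<longleftrightarrow> (\<forall>(\<nu>::'o) p \<epsilon>. maximal_pair f \<nu> p \<epsilon> \<longrightarrow>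
     f ` (Pseq f p \<epsilon> \<nu>) \<subseteq> {..< of_rat p + of_rat \<epsilon>})"

definition right_sided :: "'o::wellorder itself \<Rightarrow> (cantor \<Rightarrow> real) \<Rightarrow> bool" where
  "right_sided (_::'o itself) f \<longleftrightarrow> (\<forall>(\<nu>::'o) p \<epsilon>. maximal_pair f \<nu> p \<epsilon> \<longrightarrow>
     f ` (Pseq f p \<epsilon> \<nu>) \<subseteq> {of_rat p - of_rat \<epsilon> <..})"

text \<open>b is a correct answer to the question "y <~_eps p" (b = True means 1).\<close>
definition correct_answer :: "bool \<Rightarrow> real \<Rightarrow> rat \<Rightarrow> rat \<Rightarrow> bool" where
  "correct_answer b y p \<epsilon> \<longleftrightarrow> (b \<and> y < of_rat p + of_rat \<epsilon>) \<or> (\<not> b \<and> y > of_rat p - of_rat \<epsilon>)"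

definition m_reducible :: "(cantor \<Rightarrow> real) \<Rightarrow> (cantor \<Rightarrow> real) \<Rightarrow> bool" where
  "m_reducible f g \<longleftrightarrow> (\<forall>p \<epsilon>. \<epsilon> > 0 \<longrightarrow> (\<exists>q \<delta> (k::cantor \<Rightarrow> cantor). \<delta> > 0 \<and> continuous_on UNIV k \<and>
     (\<forall>A b. correct_answer b (g (k A)) q \<delta> \<longrightarrow> correct_answer b (f A) p \<epsilon>)))"

end

theory Submission
  imports Defs
begin



lemma compact_cantor: "compact (UNIV :: cantor set)"
proof -
  have "compact_space (euclidean :: bool topology)"
    by (simp add: compact_space_def finite_imp_compact)
  then have "compact_space (product_topology (\<lambda>i::nat. (euclidean :: bool topology)) UNIV)"
    by (simp add: compact_space_product_topology)
  then show ?thesis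
    by (simp add: euclidean_product_topology compact_space_def)
qed

definition cyl :: "nat \<Rightarrow> cantor \<Rightarrow> cantor set" where
  "cyl n x = {y. \<forall>i<n. y i = x i}"

lemma cyl_self[simp]: "x \<in> cyl n x" by (simp add: cyl_def)

lemma cyl_mono: "m \<le> n \<Longrightarrow> cyl n x \<subseteq> cyl m x" by (auto simp: cyl_def)

lemma cyl_eq: "y \<in> cyl n x \<Longrightarrow> cyl n y = cyl n x" by (auto simp: cyl_def)

lemma cyl_sym: "y \<in> cyl n x \<longleftrightarrow> x \<in> cyl n y" by (auto simp: cyl_def)

lemma open_cyl: "open (cyl n x)"
proof -
  have "cyl n x = {f. \<forall>i\<in>{..<n}. f (id i) \<in> {x i}}" by (auto simp: cyl_def)
  moreover have "open {f::cantor. \<forall>i\<in>{..<n}. f (id i) \<in> {x i}}"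
    by (rule product_topology_basis') (auto simp: open_discrete)
  ultimately show ?thesis by simp
qed

lemma open_cyl_union: "open (\<Union>z\<in>S. cyl n z)"
  using open_cyl by blast

lemma closed_cyl_union: "closed (\<Union>z\<in>S. cyl n z)"
proof -
  have "- (\<Union>z\<in>S. cyl n z) = (\<Union>y\<in>- (\<Union>z\<in>S. cyl n z). cyl n y)"
    by (auto simp: cyl_def)
  then show ?thesis unfolding closed_def by (metis open_cyl_union)
qed

lemma closed_cyl: "closed (cyl n x)"
  using closed_cyl_union[of n "{x}"] by simp

lemma open_cyl_nbhd:
  assumes "open U" "x \<in> U" shows "\<exists>n. cyl n x \<subseteq> U"
proof -
  have "openin (product_topology (\<lambda>i::nat. (euclidean :: bool topology)) UNIV) U"
    using assms by (simp add: open_fun_def)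
  then have "\<exists>V. finite {i \<in> UNIV. V i \<noteq> topspace (euclidean :: bool topology)} \<and>
        (\<forall>i \<in> UNIV. openin (euclidean :: bool topology) (V i)) \<and> x \<in> Pi\<^sub>E UNIV V \<and> Pi\<^sub>E UNIV V \<subseteq> U"
      using assms(2) unfolding openin_product_topology_alt by blast
  then obtain V where V: "finite {i \<in> UNIV. V i \<noteq> topspace (euclidean :: bool topology)}" "x \<in> PiE UNIV V" "PiE UNIV V \<subseteq> U"
    by blast
  obtain n where n: "\<forall>i\<in>{i \<in> UNIV. V i \<noteq> topspace (euclidean :: bool topology)}. i < n"
  proof -
    obtain k where "{i \<in> UNIV. V i \<noteq> topspace (euclidean :: bool topology)} \<subseteq> {..<k}"
      using finite_nat_bounded[OF V(1)] by blast
    then show ?thesis using that by blast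
  qed
  have "cyl n x \<subseteq> PiE UNIV V"
  proof
    fix y assume y: "y \<in> cyl n x"
    show "y \<in> PiE UNIV V"
    proof (simp add: PiE_iff, intro allI)
      fix i show "y i \<in> V i"
      proof (cases "i < n")
        case True then show ?thesis using y V(2) by (auto simp: cyl_def PiE_iff)
      next
        case False then show ?thesis using n by auto
      qed
    qed
  qed
  then show ?thesis using V(3) by blast
qed




lemma wf_lt: "wf {(x::'o::wellorder, y). x < y}"
  by (rule wf)

lemma succ_unique: "is_succ_of \<mu> \<nu> \<Longrightarrow> is_succ_of \<mu>' \<nu> \<Longrightarrow> \<mu> = \<mu>'"
  unfolding is_succ_of_def by (meson order.antisym)

lemma the_succ: "is_succ_of \<mu> \<nu> \<Longrightarrow> (THE \<mu>. is_succ_of \<mu> \<nu>) = \<mu>"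
  using succ_unique by blast

lemma opt_deriv_unfold:
  "opt_deriv C \<nu> = (if (\<exists>\<mu>. is_succ_of \<mu> \<nu>) then deriv_step C (opt_deriv C (THE \<mu>. is_succ_of \<mu> \<nu>))
      else \<Inter> (opt_deriv C ` {\<mu>. \<mu> < \<nu>}))" (is "_ = ?R")
proof -
  have "opt_deriv C \<nu> = (\<lambda>R \<nu>. if (\<exists>\<mu>. is_succ_of \<mu> \<nu>)
            then deriv_step C (R (THE \<mu>. is_succ_of \<mu> \<nu>))
            else \<Inter> (R ` {\<mu>. \<mu> < \<nu>})) (cut (opt_deriv C) {(x, y). x < y} \<nu>) \<nu>"
    unfolding opt_deriv_def by (rule wfrec[OF wf_lt])
  also have "\<dots> = ?R"
  proof (cases "\<exists>\<mu>. is_succ_of \<mu> \<nu>")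
    case True
    then obtain \<mu> where m: "is_succ_of \<mu> \<nu>" by blast
    then have "\<mu> < \<nu>" by (simp add: is_succ_of_def)
    then show ?thesis using m True by (simp add: the_succ cut_apply)
  next
    case False
    have "cut (opt_deriv C) {(x, y). x < y} \<nu> ` {\<mu>. \<mu> < \<nu>} = opt_deriv C ` {\<mu>. \<mu> < \<nu>}"
      by (auto simp: cut_apply)
    then show ?thesis using False by simp
  qed
  finally show ?thesis by simp
qed

lemma opt_succ: "is_succ_of \<mu> \<nu> \<Longrightarrow> opt_deriv C \<nu> = deriv_step C (opt_deriv C \<mu>)"
  by (subst opt_deriv_unfold) (auto simp: the_succ)

lemma opt_nonsucc: "\<not> (\<exists>\<mu>. is_succ_of \<mu> \<nu>) \<Longrightarrow> opt_deriv C \<nu> = \<Inter> (opt_deriv C ` {\<mu>. \<mu> < \<nu>})"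
  by (subst opt_deriv_unfold) auto

lemma deriv_step_sub: "deriv_step C P \<subseteq> P"
  by (auto simp: deriv_step_def)

lemma deriv_step_mono: "P \<subseteq> Q \<Longrightarrow> deriv_step C P \<subseteq> deriv_step C Q"
proof
  fix x assume PQ: "P \<subseteq> Q" and x: "x \<in> deriv_step C P"
  show "x \<in> deriv_step C Q" unfolding deriv_step_def
  proof
    show "x \<in> Q" using x PQ deriv_step_sub by blast
    show "x \<notin> \<Union> {U. open U \<and> (\<exists>c\<in>C. Q \<inter> U \<subseteq> c)}"
    proof
      assume "x \<in> \<Union> {U. open U \<and> (\<exists>c\<in>C. Q \<inter> U \<subseteq> c)}"
      then obtain U c where "x \<in> U" "open U" "c \<in> C" "Q \<inter> U \<subseteq> c" by blast
      then have "P \<inter> U \<subseteq> c" using PQ by blast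
      then show False using x \<open>x \<in> U\<close> \<open>open U\<close> \<open>c \<in> C\<close> unfolding deriv_step_def by blast
    qed
  qed
qed

lemma opt_anti: "\<mu> \<le> \<nu> \<Longrightarrow> opt_deriv C \<nu> \<subseteq> opt_deriv C (\<mu>::'o::wellorder)"
proof (induction \<nu> arbitrary: \<mu> rule: less_induct)
  case (less \<nu>)
  show ?case
  proof (cases "\<mu> = \<nu>")
    case True then show ?thesis by simp
  next
    case False
    then have lt: "\<mu> < \<nu>" using less.prems by simp
    show ?thesis
    proof (cases "\<exists>\<eta>. is_succ_of \<eta> \<nu>")
      case True
      then obtain \<eta> where e: "is_succ_of \<eta> \<nu>" by blast
      then have "\<mu> \<le> \<eta>" "\<eta> < \<nu>" using lt by (auto simp: is_succ_of_def)
      then show ?thesis using less.IH[of \<eta> \<mu>] opt_succ[OF e] deriv_step_sub by blast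
    next
      case False
      then show ?thesis using opt_nonsucc[OF False] lt by blast
    qed
  qed
qed

lemma opt_below_step:
  assumes "\<mu> < \<nu>" shows "opt_deriv C \<nu> \<subseteq> deriv_step C (opt_deriv C (\<mu>::'o::wellorder))"
proof (cases "\<exists>\<eta>. is_succ_of \<eta> \<nu>")
  case True
  then obtain \<eta> where e: "is_succ_of \<eta> \<nu>" by blast
  then have "\<mu> \<le> \<eta>" using assms by (auto simp: is_succ_of_def)
  then show ?thesis using opt_succ[OF e] deriv_step_mono opt_anti by metis
next
  case False
  define s where "s = (LEAST s. \<mu> < s)"
  have ms: "\<mu> < s" unfolding s_def using assms by (rule LeastI)
  have sn: "s \<le> \<nu>" unfolding s_def using assms by (rule Least_le)
  have succ: "is_succ_of \<mu> s" unfolding is_succ_of_def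
    using ms not_less_Least[of _ "\<lambda>s. \<mu> < s"] s_def by (auto simp: not_less)
  then have "s \<noteq> \<nu>" using False by blast
  then have "s < \<nu>" using sn by simp
  then have "opt_deriv C \<nu> \<subseteq> opt_deriv C s" using opt_nonsucc[OF False] by blast
  then show ?thesis using opt_succ[OF succ] by simp
qed

definition Dv :: "cantor set \<Rightarrow> cantor set \<Rightarrow> 'o::wellorder \<Rightarrow> cantor set" where
  "Dv A B \<nu> = opt_deriv {-A, -B} \<nu>"

definition dstep :: "cantor set \<Rightarrow> cantor set \<Rightarrow> cantor set \<Rightarrow> cantor set" where
  "dstep A B P = deriv_step {-A, -B} P"

lemma dstep_mem: "x \<in> dstep A B P \<longleftrightarrow> x \<in> P \<and> (\<forall>U. open U \<longrightarrow> x \<in> U \<longrightarrow> P \<inter> U \<inter> A \<noteq> {} \<and> P \<inter> U \<inter> B \<noteq> {})"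
proof -
  have e: "{U. open U \<and> (\<exists>c\<in>{-A,-B}. P \<inter> U \<subseteq> c)} = {U. open U \<and> (P \<inter> U \<inter> A = {} \<or> P \<inter> U \<inter> B = {})}"
    by auto
  have "x \<in> dstep A B P \<longleftrightarrow> x \<in> P \<and> \<not> (\<exists>U. open U \<and> (P \<inter> U \<inter> A = {} \<or> P \<inter> U \<inter> B = {}) \<and> x \<in> U)"
    unfolding dstep_def deriv_step_def e by auto
  then show ?thesis by auto
qed

lemma Dv_succ: "is_succ_of \<mu> \<nu> \<Longrightarrow> Dv A B \<nu> = dstep A B (Dv A B \<mu>)"
  by (simp add: Dv_def dstep_def opt_succ)

lemma Dv_nonsucc: "\<not> (\<exists>\<mu>. is_succ_of \<mu> \<nu>) \<Longrightarrow> Dv A B \<nu> = \<Inter> (Dv A B ` {\<mu>. \<mu> < \<nu>})"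
  by (simp add: Dv_def opt_nonsucc)

lemma Dv_anti: "\<mu> \<le> \<nu> \<Longrightarrow> Dv A B \<nu> \<subseteq> Dv A B (\<mu>::'o::wellorder)"
  by (simp add: Dv_def opt_anti)

lemma Dv_below_step: "\<mu> < \<nu> \<Longrightarrow> Dv A B \<nu> \<subseteq> dstep A B (Dv A B (\<mu>::'o::wellorder))"
  by (simp add: Dv_def dstep_def opt_below_step)

lemma closed_dstep: "closed P \<Longrightarrow> closed (dstep A B P)"
proof -
  assume "closed P"
  have "dstep A B P = P - \<Union>{U. open U \<and> (\<exists>c\<in>{-A,-B}. P \<inter> U \<subseteq> c)}"
    by (simp add: dstep_def deriv_step_def)
  moreover have "open (\<Union>{U. open U \<and> (\<exists>c\<in>{-A,-B}. P \<inter> U \<subseteq> c)})" by auto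
  ultimately show ?thesis using \<open>closed P\<close> by (simp add: closed_Diff)
qed

lemma closed_Dv: "closed (Dv A B (\<nu>::'o::wellorder))"
proof (induction \<nu> rule: less_induct)
  case (less \<nu>)
  show ?case
  proof (cases "\<exists>\<eta>. is_succ_of \<eta> \<nu>")
    case True
    then obtain \<eta> where e: "is_succ_of \<eta> \<nu>" by blast
    then have "\<eta> < \<nu>" by (simp add: is_succ_of_def)
    then show ?thesis using less.IH Dv_succ[OF e] closed_dstep by metis
  next
    case False
    then show ?thesis using Dv_nonsucc[OF False] less.IH by auto
  qed
qed

lemma Dv_bot: "\<not> (\<exists>\<mu>. \<mu> < \<nu>) \<Longrightarrow> Dv A B (\<nu>::'o::wellorder) = UNIV"
proof -
  assume a: "\<not> (\<exists>\<mu>. \<mu> < \<nu>)"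
  then have "\<not> (\<exists>\<mu>. is_succ_of \<mu> \<nu>)" by (auto simp: is_succ_of_def)
  moreover have "{\<mu>. \<mu> < \<nu>} = {}" using a by auto
  ultimately show ?thesis using Dv_nonsucc[of \<nu> A B] by simp
qed

lemma Dv_pullback:
  assumes k: "continuous_on UNIV k" and AC: "\<And>x. x \<in> A \<Longrightarrow> k x \<in> C" and BD: "\<And>x. x \<in> B \<Longrightarrow> k x \<in> D"
  shows "Dv A B (\<nu>::'o::wellorder) \<subseteq> k -` Dv C D \<nu>"
proof (induction \<nu> rule: less_induct)
  case (less \<nu>)
  show ?case
  proof (cases "\<exists>\<eta>. is_succ_of \<eta> \<nu>")
    case True
    then obtain \<eta> where e: "is_succ_of \<eta> \<nu>" by blast
    then have IH: "Dv A B \<eta> \<subseteq> k -` Dv C D \<eta>" using less.IH by (simp add: is_succ_of_def)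
    show ?thesis
    proof
      fix x assume "x \<in> Dv A B \<nu>"
      then have x: "x \<in> dstep A B (Dv A B \<eta>)" using Dv_succ[OF e] by simp
      have "k x \<in> dstep C D (Dv C D \<eta>)"
        unfolding dstep_mem
      proof (intro conjI allI impI)
        show "k x \<in> Dv C D \<eta>" using x IH by (auto simp: dstep_mem)
        fix U assume U: "open U" "k x \<in> U"
        have "open (k -` U)" using k U(1) continuous_on_open_vimage[OF open_UNIV] by auto
        then have "Dv A B \<eta> \<inter> (k -` U) \<inter> A \<noteq> {} \<and> Dv A B \<eta> \<inter> (k -` U) \<inter> B \<noteq> {}"
          using x U(2) by (simp add: dstep_mem)
        then show "Dv C D \<eta> \<inter> U \<inter> C \<noteq> {}" "Dv C D \<eta> \<inter> U \<inter> D \<noteq> {}"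
          using IH AC BD by blast+
      qed
      then show "x \<in> k -` Dv C D \<nu>" using Dv_succ[OF e] by simp
    qed
  next
    case False
    show ?thesis
    proof
      fix x assume "x \<in> Dv A B \<nu>"
      then have "\<forall>\<mu><\<nu>. x \<in> Dv A B \<mu>" using Dv_nonsucc[OF False, of A B] by auto
      then have "\<forall>\<mu><\<nu>. k x \<in> Dv C D \<mu>" using less.IH by blast
      then show "x \<in> k -` Dv C D \<nu>" using Dv_nonsucc[OF False, of C D] by auto
    qed
  qed
qed




definition red :: "cantor set \<Rightarrow> cantor set \<Rightarrow> cantor set \<Rightarrow> cantor set \<Rightarrow> cantor set \<Rightarrow> cantor set \<Rightarrow> bool" where
  "red A B C D W V \<longleftrightarrow> (\<exists>k. continuous_on W k \<and> k ` W \<subseteq> V \<and> (\<forall>x\<in>W\<inter>A. k x \<in> C) \<and> (\<forall>x\<in>W\<inter>B. k x \<in> D))"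

definition Onb :: "cantor set \<Rightarrow> nat \<Rightarrow> cantor set" where
  "Onb K n = (\<Union>z\<in>K. cyl n z)"

lemma open_Onb: "open (Onb K n)" unfolding Onb_def by (rule open_cyl_union)
lemma closed_Onb: "closed (Onb K n)" unfolding Onb_def by (rule closed_cyl_union)
lemma K_sub_Onb: "K \<subseteq> Onb K n" unfolding Onb_def using cyl_self by blast
lemma Onb_anti: "m \<le> n \<Longrightarrow> Onb K n \<subseteq> Onb K m" unfolding Onb_def using cyl_mono by blast
lemma cyl_sub_Onb: "y \<in> Onb K n \<Longrightarrow> cyl n y \<subseteq> Onb K n"
  unfolding Onb_def using cyl_eq by blast
lemma Onb_out:
  assumes "closed K" "x \<notin> K" shows "\<exists>n. x \<notin> Onb K n"
proof -
  have "open (-K)" "x \<in> -K" using assms by auto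
  then obtain n where n: "cyl n x \<subseteq> -K" using open_cyl_nbhd by blast
  have "x \<notin> Onb K n"
  proof
    assume "x \<in> Onb K n"
    then obtain z where "z \<in> K" "x \<in> cyl n z" unfolding Onb_def by blast
    then have "z \<in> cyl n x" using cyl_sym by blast
    then show False using n \<open>z \<in> K\<close> by blast
  qed
  then show ?thesis by blast
qed

lemma red_empty: "red A B C D {} V \<longleftrightarrow> True"
  unfolding red_def by (rule iffI, simp, rule exI[of _ id], simp)

lemma N_from_M:
  fixes \<nu> :: "'o::wellorder"
  assumes M: "\<And>W y V. open W \<Longrightarrow> closed W \<Longrightarrow> Dv A B \<nu> \<inter> W = {} \<Longrightarrow> y \<in> Dv C D \<nu> \<Longrightarrow> open V \<Longrightarrow> y \<in> V
        \<Longrightarrow> red A B C D W V"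
    and W: "open W" "closed W" and y: "y \<in> Dv C D \<nu>" and V: "open V" "y \<in> V"
    and hA: "Dv A B \<nu> \<inter> W \<inter> A \<noteq> {} \<Longrightarrow> y \<in> C"
    and hB: "Dv A B \<nu> \<inter> W \<inter> B \<noteq> {} \<Longrightarrow> y \<in> D"
  shows "red A B C D W V"
proof -
  define K where "K = Dv A B \<nu> \<inter> W"
  have cK: "closed K" unfolding K_def using closed_Dv W by auto
  define Ob where "Ob = Onb K"
  define E where "E n = W \<inter> - Ob n \<inter> (if n = 0 then UNIV else Ob (n - 1))" for n
  have openE: "open (E n)" for n
    unfolding E_def Ob_def using W open_Onb closed_Onb by (auto intro!: open_Int)
  have closedE: "closed (E n)" for n
    unfolding E_def Ob_def using W open_Onb closed_Onb by (auto intro!: closed_Int)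
  have EK: "Dv A B \<nu> \<inter> E n = {}" for n
    using K_sub_Onb[of K n] unfolding E_def Ob_def K_def by auto
  have "\<forall>n. red A B C D (E n) (V \<inter> cyl n y)"
    using M openE closedE EK y V open_cyl by (metis IntI cyl_self open_Int)
  then obtain h where h: "\<And>n. continuous_on (E n) (h n)" "\<And>n. h n ` E n \<subseteq> V \<inter> cyl n y"
      "\<And>n x. x \<in> E n \<inter> A \<Longrightarrow> h n x \<in> C" "\<And>n x. x \<in> E n \<inter> B \<Longrightarrow> h n x \<in> D"
    unfolding red_def by metis
  define Nx where "Nx x = (LEAST n. x \<notin> Ob n)" for x
  define k where "k x = (if x \<in> K then y else h (Nx x) x)" for x
  have Oanti: "m \<le> n \<Longrightarrow> Ob n \<subseteq> Ob m" for m n unfolding Ob_def by (rule Onb_anti)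
  have inE: "x \<in> E (Nx x)" if xW: "x \<in> W" and xK: "x \<notin> K" for x
  proof -
    obtain n where "x \<notin> Ob n" using Onb_out[OF cK xK] Ob_def by blast
    then have a: "x \<notin> Ob (Nx x)" unfolding Nx_def by (rule LeastI)
    have b: "m < Nx x \<Longrightarrow> x \<in> Ob m" for m using not_less_Least[of m "\<lambda>n. x \<notin> Ob n"] Nx_def by auto
    show ?thesis unfolding E_def using a b xW
      by (cases "Nx x = 0") auto
  qed
  have NxE: "Nx z = n" if zE: "z \<in> E n" for z n
  proof -
    have a: "z \<notin> Ob n" using zE unfolding E_def by auto
    have b: "m < n \<Longrightarrow> z \<in> Ob m" for m
    proof -
      assume "m < n"
      then have "n \<noteq> 0" "m \<le> n - 1" by auto
      then show "z \<in> Ob m" using zE Oanti[of m "n-1"] unfolding E_def by auto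
    qed
    show ?thesis unfolding Nx_def
      by (rule Least_equality) (use a b not_less in auto)
  qed
  have EnK: "z \<in> E n \<Longrightarrow> z \<notin> K" for z n
    using K_sub_Onb[of K n] unfolding E_def Ob_def by auto
  have cont: "continuous_on W k"
    unfolding continuous_on_topological
  proof (intro ballI allI impI)
    fix x Bs assume x: "x \<in> W" and Bs: "open Bs" "k x \<in> Bs"
    show "\<exists>A'. open A' \<and> x \<in> A' \<and> (\<forall>z\<in>W. z \<in> A' \<longrightarrow> k z \<in> Bs)"
    proof (cases "x \<in> K")
      case True
      then have "y \<in> Bs" using Bs unfolding k_def by simp
      then obtain m where m: "cyl m y \<subseteq> Bs" using open_cyl_nbhd Bs(1) by blast
      have "\<forall>z\<in>W. z \<in> Ob m \<longrightarrow> k z \<in> Bs"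
      proof (intro ballI impI)
        fix z assume z: "z \<in> W" "z \<in> Ob m"
        show "k z \<in> Bs"
        proof (cases "z \<in> K")
          case True then show ?thesis using \<open>y \<in> Bs\<close> unfolding k_def by simp
        next
          case False
          have zE: "z \<in> E (Nx z)" using inE z(1) False by blast
          have "m < Nx z"
          proof (rule ccontr)
            assume "\<not> m < Nx z"
            then have "Ob m \<subseteq> Ob (Nx z)" using Oanti by simp
            then show False using zE z(2) unfolding E_def by auto
          qed
          then have "cyl (Nx z) y \<subseteq> cyl m y" by (simp add: cyl_mono)
          moreover have "h (Nx z) z \<in> cyl (Nx z) y" using h(2) zE by blast
          ultimately show ?thesis using m False unfolding k_def by auto
        qed
      qed
      moreover have "x \<in> Ob m" using True K_sub_Onb Ob_def by blast
      ultimately show ?thesis using open_Onb Ob_def by blast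
    next
      case False
      define n where "n = Nx x"
      have xE: "x \<in> E n" using inE x False n_def by blast
      have "h n x \<in> Bs" using Bs False unfolding k_def n_def by simp
      then obtain A' where A': "open A'" "x \<in> A'" "\<forall>z\<in>E n. z \<in> A' \<longrightarrow> h n z \<in> Bs"
        using h(1)[of n] xE Bs(1) unfolding continuous_on_topological by metis
      have "\<forall>z\<in>W. z \<in> A' \<inter> E n \<longrightarrow> k z \<in> Bs"
        using A'(3) NxE EnK unfolding k_def by auto
      moreover have "open (A' \<inter> E n)" using A'(1) openE by auto
      ultimately show ?thesis using A'(2) xE by blast
    qed
  qed
  have img: "k ` W \<subseteq> V"
  proof
    fix z assume "z \<in> k ` W"
    then obtain x where x: "x \<in> W" "z = k x" by blast
    show "z \<in> V"
    proof (cases "x \<in> K")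
      case True then show ?thesis using x V unfolding k_def by simp
    next
      case False then show ?thesis using inE[OF x(1) False] h(2) x unfolding k_def by auto
    qed
  qed
  have rA: "\<forall>x\<in>W\<inter>A. k x \<in> C"
  proof
    fix x assume x: "x \<in> W \<inter> A"
    show "k x \<in> C"
    proof (cases "x \<in> K")
      case True then have "Dv A B \<nu> \<inter> W \<inter> A \<noteq> {}" using x K_def by blast
      then show ?thesis using hA True unfolding k_def by simp
    next
      case False then show ?thesis using inE[of x] h(3) x unfolding k_def by auto
    qed
  qed
  have rB: "\<forall>x\<in>W\<inter>B. k x \<in> D"
  proof
    fix x assume x: "x \<in> W \<inter> B"
    show "k x \<in> D"
    proof (cases "x \<in> K")
      case True then have "Dv A B \<nu> \<inter> W \<inter> B \<noteq> {}" using x K_def by blast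
      then show ?thesis using hB True unfolding k_def by simp
    next
      case False then show ?thesis using inE[of x] h(4) x unfolding k_def by auto
    qed
  qed
  show ?thesis unfolding red_def using cont img rA rB by blast
qed




lemma Step_from_MN:
  fixes \<nu> :: "'o::wellorder"
  assumes M: "\<And>W y V. open W \<Longrightarrow> closed W \<Longrightarrow> Dv A B \<nu> \<inter> W = {} \<Longrightarrow> y \<in> Dv C D \<nu> \<Longrightarrow> open V \<Longrightarrow> y \<in> V
        \<Longrightarrow> red A B C D W V"
    and W: "open W" "closed W"
    and loc: "\<And>x. x \<in> Dv A B \<nu> \<inter> W \<Longrightarrow> \<exists>U. open U \<and> x \<in> U \<and> (Dv A B \<nu> \<inter> U \<inter> A = {} \<or> Dv A B \<nu> \<inter> U \<inter> B = {})"
    and z1: "z1 \<in> Dv C D \<nu>" "z1 \<in> C" "z1 \<in> V" and z2: "z2 \<in> Dv C D \<nu>" "z2 \<in> D" "z2 \<in> V"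
    and V: "open V"
  shows "red A B C D W V"
proof -
  define K where "K = Dv A B \<nu> \<inter> W"
  have cK: "closed K" unfolding K_def using closed_Dv W by auto
  have kK: "compact K" using compact_Int_closed[OF compact_cantor cK] by simp
  define good where "good c \<longleftrightarrow> Dv A B \<nu> \<inter> c \<inter> A = {} \<or> Dv A B \<nu> \<inter> c \<inter> B = {}" for c
  have good_sub: "good c \<Longrightarrow> c' \<subseteq> c \<Longrightarrow> good c'" for c c' unfolding good_def by blast
  have "\<forall>x\<in>K. \<exists>m. good (cyl m x)"
  proof
    fix x assume "x \<in> K"
    then have "x \<in> Dv A B \<nu> \<inter> W" unfolding K_def .
    from loc[OF this] obtain U where U: "open U" "x \<in> U" "good U" unfolding good_def by blast
    obtain m where "cyl m x \<subseteq> U" using open_cyl_nbhd[OF U(1,2)] by blast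
    then have "good (cyl m x)" by (rule good_sub[OF U(3)])
    then show "\<exists>m. good (cyl m x)" by (rule exI)
  qed
  from bchoice[OF this] obtain m where m0: "\<forall>x\<in>K. good (cyl (m x) x)" by blast
  then have m: "\<And>x. x \<in> K \<Longrightarrow> good (cyl (m x) x)" by blast
  have cov: "K \<subseteq> (\<Union>x\<in>K. cyl (m x) x)" using cyl_self by blast
  obtain F where F: "F \<subseteq> K" "finite F" "K \<subseteq> (\<Union>x\<in>F. cyl (m x) x)"
    by (rule compactE_image[OF kK _ cov]) (rule open_cyl)
  define n where "n = sum m F"
  have goodn: "good (cyl n z)" if zK: "z \<in> K" for z
  proof -
    obtain x where x: "x \<in> F" "z \<in> cyl (m x) x" using F(3) zK by blast
    have "m x \<le> n" unfolding n_def using x(1) F(2) by (simp add: member_le_sum)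
    then have "cyl n z \<subseteq> cyl (m x) z" by (rule cyl_mono)
    also have "\<dots> = cyl (m x) x" using x(2) by (rule cyl_eq)
    finally show ?thesis using m F(1) x(1) good_sub by blast
  qed
  define Ob where "Ob = Onb K n"
  have piece: "\<exists>h. continuous_on c h \<and> h ` c \<subseteq> V \<and> (\<forall>x\<in>c\<inter>A. h x \<in> C) \<and> (\<forall>x\<in>c\<inter>B. h x \<in> D)"
    if c: "c \<in> (\<lambda>z. cyl n z) ` K" for c
  proof -
    obtain z where z: "z \<in> K" "c = cyl n z" using c by blast
    have oc: "open c" "closed c" using z open_cyl closed_cyl by auto
    have "red A B C D c V"
    proof (cases "Dv A B \<nu> \<inter> c \<inter> A = {}")
      case True
      show ?thesis by (rule N_from_M[OF M oc z2(1) V z2(3)]) (use True z2(2) in auto)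
    next
      case False
      then have "Dv A B \<nu> \<inter> c \<inter> B = {}" using goodn[OF z(1)] z(2) good_def by blast
      then show ?thesis by (intro N_from_M[OF M oc z1(1) V z1(3)]) (use z1(2) in auto)
    qed
    then show ?thesis unfolding red_def by blast
  qed
  then have "\<forall>c\<in>(\<lambda>z. cyl n z) ` K. \<exists>h. continuous_on c h \<and> h ` c \<subseteq> V \<and> (\<forall>x\<in>c\<inter>A. h x \<in> C) \<and> (\<forall>x\<in>c\<inter>B. h x \<in> D)"
    by blast
  then obtain H where H0: "\<forall>c\<in>(\<lambda>z. cyl n z) ` K. continuous_on c (H c) \<and> H c ` c \<subseteq> V \<and>
      (\<forall>x\<in>c\<inter>A. H c x \<in> C) \<and> (\<forall>x\<in>c\<inter>B. H c x \<in> D)"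
    by (rule bchoice[elim_format]) blast
  then have H: "\<And>c. c \<in> (\<lambda>z. cyl n z) ` K \<Longrightarrow> continuous_on c (H c) \<and> H c ` c \<subseteq> V \<and>
      (\<forall>x\<in>c\<inter>A. H c x \<in> C) \<and> (\<forall>x\<in>c\<inter>B. H c x \<in> D)" by blast
  define R where "R = W \<inter> - Ob"
  have oR: "open R" "closed R" unfolding R_def Ob_def using W open_Onb closed_Onb by (auto intro!: open_Int closed_Int simp: open_Compl closed_Compl)
  have RK: "Dv A B \<nu> \<inter> R = {}" unfolding R_def Ob_def K_def using K_sub_Onb[of "Dv A B \<nu> \<inter> W" n] by auto
  obtain kR where kR: "continuous_on R kR" "kR ` R \<subseteq> V" "\<forall>x\<in>R\<inter>A. kR x \<in> C" "\<forall>x\<in>R\<inter>B. kR x \<in> D"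
    using M[OF oR RK z1(1) V z1(3)] unfolding red_def by blast
  have fam: "x \<in> Ob \<Longrightarrow> cyl n x \<in> (\<lambda>z. cyl n z) ` K" for x
    unfolding Ob_def Onb_def using cyl_eq by blast
  have cO: "x \<in> Ob \<Longrightarrow> cyl n x \<subseteq> Ob" for x unfolding Ob_def by (rule cyl_sub_Onb)
  define k where "k x = (if x \<in> Ob then H (cyl n x) x else kR x)" for x
  have cont: "continuous_on W k"
    unfolding continuous_on_topological
  proof (intro ballI allI impI)
    fix x Bs assume x: "x \<in> W" and Bs: "open Bs" "k x \<in> Bs"
    show "\<exists>A'. open A' \<and> x \<in> A' \<and> (\<forall>z\<in>W. z \<in> A' \<longrightarrow> k z \<in> Bs)"
    proof (cases "x \<in> Ob")
      case True
      define c where "c = cyl n x"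
      have Hc: "continuous_on c (H c)" using H fam[OF True] c_def by blast
      have "H c x \<in> Bs" using Bs True unfolding k_def c_def by simp
      then obtain A' where A': "open A'" "x \<in> A'" "\<forall>z\<in>c. z \<in> A' \<longrightarrow> H c z \<in> Bs"
        using Hc Bs(1) cyl_self c_def unfolding continuous_on_topological by metis
      have "\<forall>z\<in>W. z \<in> A' \<inter> c \<longrightarrow> k z \<in> Bs"
      proof (intro ballI impI)
        fix z assume "z \<in> W" "z \<in> A' \<inter> c"
        then have "z \<in> Ob" "cyl n z = c" using cO[OF True] c_def cyl_eq by blast+
        then show "k z \<in> Bs" using A'(3) \<open>z \<in> A' \<inter> c\<close> unfolding k_def by simp
      qed
      moreover have "open (A' \<inter> c)" using A'(1) open_cyl c_def by auto
      moreover have "x \<in> A' \<inter> c" using A'(2) c_def by simp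
      ultimately show ?thesis by blast
    next
      case False
      then have xR: "x \<in> R" using x R_def by blast
      have "kR x \<in> Bs" using Bs False unfolding k_def by simp
      then obtain A' where A': "open A'" "x \<in> A'" "\<forall>z\<in>R. z \<in> A' \<longrightarrow> kR z \<in> Bs"
        using kR(1) xR Bs(1) unfolding continuous_on_topological by metis
      have "\<forall>z\<in>W. z \<in> A' \<inter> R \<longrightarrow> k z \<in> Bs"
        using A'(3) unfolding k_def R_def by auto
      moreover have "open (A' \<inter> R)" using A'(1) oR by auto
      ultimately show ?thesis using A'(2) xR by blast
    qed
  qed
  have img: "k ` W \<subseteq> V"
  proof
    fix z assume "z \<in> k ` W"
    then obtain x where x: "x \<in> W" "z = k x" by blast
    show "z \<in> V"
    proof (cases "x \<in> Ob")
      case True then show ?thesis using H[OF fam[OF True]] x cyl_self unfolding k_def by auto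
    next
      case False then show ?thesis using kR(2) x R_def unfolding k_def by auto
    qed
  qed
  have rA: "\<forall>x\<in>W\<inter>A. k x \<in> C"
  proof
    fix x assume x: "x \<in> W \<inter> A"
    show "k x \<in> C"
    proof (cases "x \<in> Ob")
      case True then show ?thesis using H[OF fam[OF True]] x cyl_self unfolding k_def by auto
    next
      case False then show ?thesis using kR(3) x R_def unfolding k_def by auto
    qed
  qed
  have rB: "\<forall>x\<in>W\<inter>B. k x \<in> D"
  proof
    fix x assume x: "x \<in> W \<inter> B"
    show "k x \<in> D"
    proof (cases "x \<in> Ob")
      case True then show ?thesis using H[OF fam[OF True]] x cyl_self unfolding k_def by auto
    next
      case False then show ?thesis using kR(4) x R_def unfolding k_def by auto
    qed
  qed
  show ?thesis unfolding red_def using cont img rA rB by blast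
qed




lemma M_all:
  fixes \<nu> :: "'o::wellorder"
  shows "\<forall>W y V. open W \<longrightarrow> closed W \<longrightarrow> Dv A B \<nu> \<inter> W = {} \<longrightarrow> y \<in> Dv C D \<nu> \<longrightarrow> open V \<longrightarrow> y \<in> V
        \<longrightarrow> red A B C D W V"
proof (induction \<nu> rule: less_induct)
  case (less \<nu>)
  show ?case
  proof (intro allI impI)
    fix W y V
    assume W: "open W" "closed W" and WD: "Dv A B \<nu> \<inter> W = {}" and y: "y \<in> Dv C D \<nu>" and V: "open V" "y \<in> V"
    show "red A B C D W V"
    proof (cases "\<exists>\<eta>. is_succ_of \<eta> \<nu>")
      case True
      then obtain \<eta> where e: "is_succ_of \<eta> \<nu>" by blast
      then have lt: "\<eta> < \<nu>" by (simp add: is_succ_of_def)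
      have M: "\<And>W y V. open W \<Longrightarrow> closed W \<Longrightarrow> Dv A B \<eta> \<inter> W = {} \<Longrightarrow> y \<in> Dv C D \<eta> \<Longrightarrow> open V \<Longrightarrow> y \<in> V
        \<Longrightarrow> red A B C D W V" using less.IH[OF lt] by blast
      have yd: "y \<in> dstep C D (Dv C D \<eta>)" using y Dv_succ[OF e] by simp
      then have "Dv C D \<eta> \<inter> V \<inter> C \<noteq> {}" "Dv C D \<eta> \<inter> V \<inter> D \<noteq> {}"
        using V unfolding dstep_mem by blast+
      then obtain z1 z2 where z1: "z1 \<in> Dv C D \<eta>" "z1 \<in> C" "z1 \<in> V" and z2: "z2 \<in> Dv C D \<eta>" "z2 \<in> D" "z2 \<in> V"
        by blast
      have loc: "\<exists>U. open U \<and> x \<in> U \<and> (Dv A B \<eta> \<inter> U \<inter> A = {} \<or> Dv A B \<eta> \<inter> U \<inter> B = {})"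
        if x: "x \<in> Dv A B \<eta> \<inter> W" for x
      proof -
        have "x \<notin> dstep A B (Dv A B \<eta>)" using WD x Dv_succ[OF e] by blast
        then show ?thesis using x unfolding dstep_mem by blast
      qed
      show ?thesis by (rule Step_from_MN[OF M W loc z1 z2 V(1)])
    next
      case False
      show ?thesis
      proof (cases "\<exists>\<mu>. \<mu> < \<nu>")
        case False
        then have "W = {}" using WD Dv_bot[of \<nu> A B] by simp
        then show ?thesis by (simp add: red_empty)
      next
        case True
        then obtain \<mu>0 where \<mu>0: "\<mu>0 < \<nu>" by blast
        have eq: "Dv A B \<nu> = \<Inter> (Dv A B ` {\<mu>. \<mu> < \<nu>})" using Dv_nonsucc[OF False] .
        have "\<exists>F'. finite F' \<and> F' \<subseteq> Dv A B ` {\<mu>. \<mu> < \<nu>} \<and> W \<inter> \<Inter>F' = {}"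
        proof (rule ccontr)
          assume "\<not> ?thesis"
          then have nf: "\<And>F'. finite F' \<Longrightarrow> F' \<subseteq> Dv A B ` {\<mu>. \<mu> < \<nu>} \<Longrightarrow> W \<inter> \<Inter>F' \<noteq> {}"
            by blast
          have cW: "compact W" using compact_Int_closed[OF compact_cantor W(2)] by simp
          have "W \<inter> \<Inter>(Dv A B ` {\<mu>. \<mu> < \<nu>}) \<noteq> {}"
          proof (rule compact_imp_fip[OF cW])
            show "\<And>T. T \<in> Dv A B ` {\<mu>. \<mu> < \<nu>} \<Longrightarrow> closed T" using closed_Dv by blast
          qed (rule nf)
          then show False using WD eq by auto
        qed
        then obtain F' where F': "finite F'" "F' \<subseteq> Dv A B ` {\<mu>. \<mu> < \<nu>}" "W \<inter> \<Inter>F' = {}" by blast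
        then obtain I where I: "finite I" "I \<subseteq> {\<mu>. \<mu> < \<nu>}" "F' = Dv A B ` I"
          by (meson finite_subset_image)
        define \<mu> where "\<mu> = Max (insert \<mu>0 I)"
        have mu_lt: "\<mu> < \<nu>" unfolding \<mu>_def using I \<mu>0 by (subst Max_less_iff) auto
        have "Dv A B \<mu> \<subseteq> \<Inter>F'"
        proof
          fix x assume "x \<in> Dv A B \<mu>"
          show "x \<in> \<Inter>F'"
          proof
            fix T assume "T \<in> F'"
            then obtain i where i: "i \<in> I" "T = Dv A B i" using I(3) by blast
            have "i \<le> \<mu>" unfolding \<mu>_def using i(1) I(1) by (simp add: Max_ge)
            then show "x \<in> T" using Dv_anti[of i \<mu> A B] \<open>x \<in> Dv A B \<mu>\<close> i(2) by blast
          qed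
        qed
        then have WD': "Dv A B \<mu> \<inter> W = {}" using F'(3) by blast
        have y': "y \<in> Dv C D \<mu>" using y Dv_anti[of \<mu> \<nu> C D] mu_lt by (meson less_imp_le subsetD)
        show ?thesis using less.IH[OF mu_lt] W WD' y' V by blast
      qed
    qed
  qed
qed

lemma M_lemma:
  fixes \<nu> :: "'o::wellorder"
  shows "open W \<Longrightarrow> closed W \<Longrightarrow> Dv A B \<nu> \<inter> W = {} \<Longrightarrow> y \<in> Dv C D \<nu> \<Longrightarrow> open V \<Longrightarrow> y \<in> V
        \<Longrightarrow> red A B C D W V"
  using M_all by blast

lemma N_lemma:
  fixes \<nu> :: "'o::wellorder"
  assumes "y \<in> Dv C D \<nu>"
    and hA: "Dv A B \<nu> \<inter> A \<noteq> {} \<Longrightarrow> y \<in> C"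
    and hB: "Dv A B \<nu> \<inter> B \<noteq> {} \<Longrightarrow> y \<in> D"
  shows "red A B C D UNIV UNIV"
  by (rule N_from_M[where W=UNIV and V=UNIV and y=y and \<nu>=\<nu>, OF M_lemma]) (use assms in auto)

lemma Step_lemma:
  fixes \<nu> :: "'o::wellorder"
  assumes loc: "\<And>x. x \<in> Dv A B \<nu> \<Longrightarrow> \<exists>U. open U \<and> x \<in> U \<and> (Dv A B \<nu> \<inter> U \<inter> A = {} \<or> Dv A B \<nu> \<inter> U \<inter> B = {})"
    and z1: "z1 \<in> Dv C D \<nu>" "z1 \<in> C" and z2: "z2 \<in> Dv C D \<nu>" "z2 \<in> D"
  shows "red A B C D UNIV UNIV"
  by (rule Step_from_MN[where W=UNIV and V=UNIV and \<nu>=\<nu>, OF M_lemma]) (use assms in auto)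




lemma baire_cantor_nat:
  fixes P :: "cantor set" and F :: "nat \<Rightarrow> cantor set"
  assumes P: "closed P" "P \<noteq> {}" and Fc: "\<And>n. closed (F n)" and cov: "P \<subseteq> (\<Union>n. F n)"
  shows "\<exists>n U. open U \<and> P \<inter> U \<noteq> {} \<and> P \<inter> U \<subseteq> F n"
proof (rule ccontr)
  assume H: "\<not> ?thesis"
  have stp: "\<exists>x' m'. x' \<in> P \<and> cyl m' x' \<subseteq> cyl m x \<and> cyl m' x' \<inter> F n = {}" if x: "x \<in> P" for x m n
  proof -
    have "P \<inter> cyl m x \<noteq> {}" using x cyl_self by blast
    then have "\<not> P \<inter> cyl m x \<subseteq> F n" using H open_cyl by blast
    then obtain z where z: "z \<in> P" "z \<in> cyl m x" "z \<notin> F n" by blast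
    have "open (- F n)" using Fc by auto
    then obtain j where j: "cyl j z \<subseteq> - F n" using open_cyl_nbhd z(3) by blast
    have "cyl (max j m) z \<subseteq> cyl m z" by (rule cyl_mono) simp
    also have "\<dots> = cyl m x" using z(2) by (rule cyl_eq)
    finally have a: "cyl (max j m) z \<subseteq> cyl m x" .
    have "cyl (max j m) z \<subseteq> cyl j z" by (rule cyl_mono) simp
    then have b: "cyl (max j m) z \<inter> F n = {}" using j by blast
    show ?thesis using z(1) a b by blast
  qed
  obtain x0 where x0: "x0 \<in> P" using P(2) by blast
  define nxt where "nxt n s = (SOME s'. fst s' \<in> P \<and> cyl (snd s') (fst s') \<subseteq> cyl (snd s) (fst s) \<and> cyl (snd s') (fst s') \<inter> F n = {})" for n and s :: "cantor \<times> nat"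
  define s where "s = rec_nat (x0, 0) nxt"
  have s0: "s 0 = (x0, 0)" unfolding s_def by simp
  have sS: "s (Suc n) = nxt n (s n)" for n unfolding s_def by simp
  have nxt_ok: "fst (nxt n t) \<in> P \<and> cyl (snd (nxt n t)) (fst (nxt n t)) \<subseteq> cyl (snd t) (fst t) \<and> cyl (snd (nxt n t)) (fst (nxt n t)) \<inter> F n = {}"
    if ft: "fst t \<in> P" for n t
  proof -
    obtain x' m' where "x' \<in> P \<and> cyl m' x' \<subseteq> cyl (snd t) (fst t) \<and> cyl m' x' \<inter> F n = {}"
      using stp[OF ft] by blast
    then have "\<exists>s'. fst s' \<in> P \<and> cyl (snd s') (fst s') \<subseteq> cyl (snd t) (fst t) \<and> cyl (snd s') (fst s') \<inter> F n = {}"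
      by (intro exI[of _ "(x', m')"]) simp
    then show ?thesis unfolding nxt_def by (rule someI_ex)
  qed
  have sP: "fst (s n) \<in> P" for n
  proof (induction n)
    case 0 then show ?case using s0 x0 by simp
  next
    case (Suc n) then show ?case using nxt_ok sS by simp
  qed
  define T where "T n = P \<inter> cyl (snd (s n)) (fst (s n))" for n
  have Tdec: "T (Suc n) \<subseteq> T n" for n using nxt_ok[OF sP[of n]] sS[of n] unfolding T_def by auto
  have TF: "T (Suc n) \<inter> F n = {}" for n using nxt_ok[OF sP[of n]] sS[of n] unfolding T_def by auto
  have Tanti: "m \<le> n \<Longrightarrow> T n \<subseteq> T m" for m n
    by (rule lift_Suc_antimono_le[of T]) (use Tdec in auto)
  have Tne: "T n \<noteq> {}" for n unfolding T_def using sP cyl_self by blast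
  have "UNIV \<inter> \<Inter>(range T) \<noteq> {}"
  proof (rule compact_imp_fip[OF compact_cantor])
    show "\<And>X. X \<in> range T \<Longrightarrow> closed X" unfolding T_def using P(1) closed_cyl by auto
    fix F' assume F': "finite F'" "F' \<subseteq> range T"
    then obtain I where I: "finite I" "F' = T ` I" by (meson finite_subset_image)
    define N where "N = Max (insert 0 I)"
    have "T N \<subseteq> \<Inter>F'"
    proof
      fix x assume "x \<in> T N"
      show "x \<in> \<Inter>F'"
      proof
        fix X assume "X \<in> F'"
        then obtain i where i: "i \<in> I" "X = T i" using I(2) by blast
        have "i \<le> N" unfolding N_def using i(1) I(1) by simp
        then show "x \<in> X" using Tanti \<open>x \<in> T N\<close> i(2) by blast
      qed
    qed
    then show "UNIV \<inter> \<Inter>F' \<noteq> {}" using Tne[of N] by blast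
  qed
  then obtain w where w: "\<And>n. w \<in> T n" by blast
  then have "w \<in> P" unfolding T_def by blast
  then obtain n where "w \<in> F n" using cov by blast
  then show False using w[of "Suc n"] TF[of n] by blast
qed

lemma baire_cantor:
  fixes P :: "cantor set"
  assumes P: "closed P" "P \<noteq> {}" and Fc: "\<And>T. T \<in> \<F> \<Longrightarrow> closed T" and cov: "P \<subseteq> \<Union>\<F>" and cnt: "countable \<F>"
  shows "\<exists>T\<in>\<F>. \<exists>U. open U \<and> P \<inter> U \<noteq> {} \<and> P \<inter> U \<subseteq> T"
proof -
  have ne: "\<F> \<noteq> {}" using cov P(2) by blast
  define F where "F n = from_nat_into \<F> n" for n
  have r: "range F = \<F>" unfolding F_def using range_from_nat_into[OF ne cnt] .
  have "\<exists>n U. open U \<and> P \<inter> U \<noteq> {} \<and> P \<inter> U \<subseteq> F n"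
    by (rule baire_cantor_nat[OF P]) (use Fc cov r in auto)
  then show ?thesis using r by blast
qed

lemma nonstuck:
  assumes "baire1 f" "closed P" "P \<noteq> {}" "b < a"
  shows "\<exists>U. open U \<and> P \<inter> U \<noteq> {} \<and> (P \<inter> U \<inter> {x. a \<le> f x} = {} \<or> P \<inter> U \<inter> {x. f x \<le> b} = {})"
proof -
  obtain fn where fc: "\<And>n. continuous_on UNIV (fn n)" and lim: "\<And>x. (\<lambda>n. fn n x) \<longlonglongrightarrow> f x"
    using assms(1) unfolding baire1_def by blast
  define Fl where "Fl k N = (\<Inter>n\<in>{N..}. {x. fn n x \<le> a - inverse (real (Suc k))})" for k N
  define Fr where "Fr k N = (\<Inter>n\<in>{N..}. {x. b + inverse (real (Suc k)) \<le> fn n x})" for k N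
  define \<F> where "\<F> = range (case_prod Fl) \<union> range (case_prod Fr)"
  have cnt: "countable \<F>" unfolding \<F>_def by simp
  have cl: "closed T" if "T \<in> \<F>" for T
  proof -
    have "closed (Fl k N)" "closed (Fr k N)" for k N
      unfolding Fl_def Fr_def
      by (intro closed_INT ballI closed_Collect_le continuous_on_const fc)+
    then show ?thesis using that unfolding \<F>_def by auto
  qed
  have cov: "P \<subseteq> \<Union>\<F>"
  proof
    fix x assume "x \<in> P"
    show "x \<in> \<Union>\<F>"
    proof (cases "f x < a")
      case True
      then have "0 < a - f x" by simp
      then obtain k where k: "inverse (real (Suc k)) < a - f x" using reals_Archimedean by blast
      then have "f x < a - inverse (real (Suc k))" by simp
      then have "eventually (\<lambda>n. fn n x < a - inverse (real (Suc k))) sequentially"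
        by (rule order_tendstoD(2)[OF lim])
      then obtain N where "\<forall>n\<ge>N. fn n x < a - inverse (real (Suc k))" unfolding eventually_sequentially by blast
      then have "x \<in> Fl k N" unfolding Fl_def by (auto intro: less_imp_le)
      then show ?thesis unfolding \<F>_def by blast
    next
      case False
      then have "b < f x" using assms(4) by simp
      then have "0 < f x - b" by simp
      then obtain k where k: "inverse (real (Suc k)) < f x - b" using reals_Archimedean by blast
      then have "b + inverse (real (Suc k)) < f x" by simp
      then have "eventually (\<lambda>n. b + inverse (real (Suc k)) < fn n x) sequentially"
        by (rule order_tendstoD(1)[OF lim])
      then obtain N where "\<forall>n\<ge>N. b + inverse (real (Suc k)) < fn n x" unfolding eventually_sequentially by blast
      then have "x \<in> Fr k N" unfolding Fr_def by (auto intro: less_imp_le)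
      then show ?thesis unfolding \<F>_def by blast
    qed
  qed
  obtain T U where TU: "T \<in> \<F>" "open U" "P \<inter> U \<noteq> {}" "P \<inter> U \<subseteq> T"
    using baire_cantor[OF assms(2,3) cl cov cnt] by blast
  have Fl_dis: "Fl k N \<inter> {x. a \<le> f x} = {}" for k N
  proof -
    have "f x \<le> a - inverse (real (Suc k))" if "x \<in> Fl k N" for x
      using that unfolding Fl_def by (intro LIMSEQ_le_const2[OF lim]) auto
    moreover have "0 < inverse (real (Suc k))" by (simp del: of_nat_Suc)
    ultimately show ?thesis by (smt (verit) disjoint_iff mem_Collect_eq)
  qed
  have Fr_dis: "Fr k N \<inter> {x. f x \<le> b} = {}" for k N
  proof -
    have "b + inverse (real (Suc k)) \<le> f x" if "x \<in> Fr k N" for x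
      using that unfolding Fr_def by (intro LIMSEQ_le_const[OF lim]) auto
    moreover have "0 < inverse (real (Suc k))" by (simp del: of_nat_Suc)
    ultimately show ?thesis by (smt (verit) disjoint_iff mem_Collect_eq)
  qed
  show ?thesis
  proof (intro exI conjI)
    show "open U" "P \<inter> U \<noteq> {}" using TU by auto
    show "P \<inter> U \<inter> {x. a \<le> f x} = {} \<or> P \<inter> U \<inter> {x. f x \<le> b} = {}"
    proof -
      obtain k N where "T = Fl k N \<or> T = Fr k N" using TU(1) unfolding \<F>_def by auto
      then show ?thesis
      proof
        assume "T = Fl k N"
        then have "P \<inter> U \<inter> {x. a \<le> f x} \<subseteq> Fl k N \<inter> {x. a \<le> f x}" using TU(4) by blast
        then show ?thesis using Fl_dis[of k N] by blast
      next
        assume "T = Fr k N"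
        then have "P \<inter> U \<inter> {x. f x \<le> b} \<subseteq> Fr k N \<inter> {x. f x \<le> b}" using TU(4) by blast
        then show ?thesis using Fr_dis[of k N] by blast
      qed
    qed
  qed
qed




definition cylL :: "bool list \<Rightarrow> cantor set" where
  "cylL l = cyl (length l) (\<lambda>i. if i < length l then l ! i else False)"

lemma cyl_as_cylL: "cyl n x = cylL (map x [0..<n])"
  by (auto simp: cylL_def cyl_def)

lemma open_cylL: "open (cylL l)" unfolding cylL_def by (rule open_cyl)

lemma Dv_limit_compact:
  fixes \<nu> :: "'o::wellorder"
  assumes ns: "\<not> (\<exists>\<mu>. is_succ_of \<mu> \<nu>)" and \<mu>0: "\<mu>0 < \<nu>" and W: "closed W" and WD: "Dv A B \<nu> \<inter> W = {}"
  shows "\<exists>\<mu><\<nu>. Dv A B \<mu> \<inter> W = {}"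
proof -
  have eq: "Dv A B \<nu> = \<Inter> (Dv A B ` {\<mu>. \<mu> < \<nu>})" using Dv_nonsucc[OF ns] .
  have "\<exists>F'. finite F' \<and> F' \<subseteq> Dv A B ` {\<mu>. \<mu> < \<nu>} \<and> W \<inter> \<Inter>F' = {}"
  proof (rule ccontr)
    assume "\<not> ?thesis"
    then have nf: "\<And>F'. finite F' \<Longrightarrow> F' \<subseteq> Dv A B ` {\<mu>. \<mu> < \<nu>} \<Longrightarrow> W \<inter> \<Inter>F' \<noteq> {}"
      by blast
    have cW: "compact W" using compact_Int_closed[OF compact_cantor W] by simp
    have "W \<inter> \<Inter>(Dv A B ` {\<mu>. \<mu> < \<nu>}) \<noteq> {}"
    proof (rule compact_imp_fip[OF cW])
      show "\<And>T. T \<in> Dv A B ` {\<mu>. \<mu> < \<nu>} \<Longrightarrow> closed T" using closed_Dv by blast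
    qed (rule nf)
    then show False using WD eq by auto
  qed
  then obtain F' where F': "finite F'" "F' \<subseteq> Dv A B ` {\<mu>. \<mu> < \<nu>}" "W \<inter> \<Inter>F' = {}" by blast
  then obtain I where I: "finite I" "I \<subseteq> {\<mu>. \<mu> < \<nu>}" "F' = Dv A B ` I"
    by (meson finite_subset_image)
  define \<mu> where "\<mu> = Max (insert \<mu>0 I)"
  have mu_lt: "\<mu> < \<nu>" unfolding \<mu>_def using I \<mu>0 by (subst Max_less_iff) auto
  have "Dv A B \<mu> \<subseteq> \<Inter>F'"
  proof
    fix x assume "x \<in> Dv A B \<mu>"
    show "x \<in> \<Inter>F'"
    proof
      fix T assume "T \<in> F'"
      then obtain i where i: "i \<in> I" "T = Dv A B i" using I(3) by blast
      have "i \<le> \<mu>" unfolding \<mu>_def using i(1) I(1) by (simp add: Max_ge)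
      then show "x \<in> T" using Dv_anti[of i \<mu> A B] \<open>x \<in> Dv A B \<mu>\<close> i(2) by blast
    qed
  qed
  then have "Dv A B \<mu> \<inter> W = {}" using F'(3) by blast
  then show ?thesis using mu_lt by blast
qed

lemma Dv_countable:
  fixes A B :: "cantor set"
  assumes ns: "\<And>P. closed P \<Longrightarrow> P \<noteq> {} \<Longrightarrow> \<exists>U. open U \<and> P \<inter> U \<noteq> {} \<and> (P \<inter> U \<inter> A = {} \<or> P \<inter> U \<inter> B = {})"
  shows "countable {\<nu>::'o::wellorder. Dv A B \<nu> \<noteq> {}}"
proof -
  define S where "S = {\<nu>::'o. Dv A B \<nu> \<noteq> {}}"
  have "\<forall>\<nu>\<in>S. \<exists>l. cylL l \<inter> Dv A B \<nu> \<noteq> {} \<and> (Dv A B \<nu> \<inter> cylL l \<inter> A = {} \<or> Dv A B \<nu> \<inter> cylL l \<inter> B = {})"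
  proof
    fix \<nu> assume "\<nu> \<in> S"
    then have ne: "Dv A B \<nu> \<noteq> {}" unfolding S_def by blast
    obtain U where U: "open U" "Dv A B \<nu> \<inter> U \<noteq> {}" "Dv A B \<nu> \<inter> U \<inter> A = {} \<or> Dv A B \<nu> \<inter> U \<inter> B = {}"
      using ns[OF closed_Dv ne] by blast
    obtain x where x: "x \<in> Dv A B \<nu>" "x \<in> U" using U(2) by blast
    obtain n where n: "cyl n x \<subseteq> U" using open_cyl_nbhd[OF U(1) x(2)] by blast
    have "cylL (map x [0..<n]) \<inter> Dv A B \<nu> \<noteq> {}" using x(1) cyl_self cyl_as_cylL by blast
    moreover have "Dv A B \<nu> \<inter> cylL (map x [0..<n]) \<inter> A = {} \<or> Dv A B \<nu> \<inter> cylL (map x [0..<n]) \<inter> B = {}"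
      using U(3) n cyl_as_cylL by blast
    ultimately show "\<exists>l. cylL l \<inter> Dv A B \<nu> \<noteq> {} \<and> (Dv A B \<nu> \<inter> cylL l \<inter> A = {} \<or> Dv A B \<nu> \<inter> cylL l \<inter> B = {})"
      by blast
  qed
  from bchoice[OF this] obtain g where g: "\<forall>\<nu>\<in>S. cylL (g \<nu>) \<inter> Dv A B \<nu> \<noteq> {} \<and>
      (Dv A B \<nu> \<inter> cylL (g \<nu>) \<inter> A = {} \<or> Dv A B \<nu> \<inter> cylL (g \<nu>) \<inter> B = {})" by blast
  have sep: "cylL (g \<nu>) \<inter> Dv A B \<nu>' = {}" if "\<nu> \<in> S" "\<nu> < \<nu>'" for \<nu> \<nu>'
  proof (rule ccontr)
    assume "cylL (g \<nu>) \<inter> Dv A B \<nu>' \<noteq> {}"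
    then obtain z where z: "z \<in> cylL (g \<nu>)" "z \<in> Dv A B \<nu>'" by blast
    then have "z \<in> dstep A B (Dv A B \<nu>)" using Dv_below_step[OF that(2)] by blast
    then have "Dv A B \<nu> \<inter> cylL (g \<nu>) \<inter> A \<noteq> {} \<and> Dv A B \<nu> \<inter> cylL (g \<nu>) \<inter> B \<noteq> {}"
      using z(1) open_cylL unfolding dstep_mem by blast
    then show False using g that(1) by blast
  qed
  have "inj_on g S"
  proof (rule inj_onI)
    fix \<nu> \<nu>' assume a: "\<nu> \<in> S" "\<nu>' \<in> S" "g \<nu> = g \<nu>'"
    show "\<nu> = \<nu>'"
    proof (rule linorder_cases[of \<nu> \<nu>'])
      assume "\<nu> < \<nu>'"
      then show ?thesis using sep[OF a(1)] g a(2,3) by metis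
    next
      assume "\<nu>' < \<nu>"
      then show ?thesis using sep[OF a(2)] g a(1,3) by metis
    qed
  qed
  moreover have "countable (g ` S)" by simp
  ultimately show ?thesis using countable_image_inj_on S_def by blast
qed

definition Af :: "(cantor \<Rightarrow> real) \<Rightarrow> rat \<Rightarrow> rat \<Rightarrow> cantor set" where
  "Af f p \<epsilon> = {x. of_rat p + of_rat \<epsilon> \<le> f x}"
definition Bf :: "(cantor \<Rightarrow> real) \<Rightarrow> rat \<Rightarrow> rat \<Rightarrow> cantor set" where
  "Bf f p \<epsilon> = {x. f x \<le> of_rat p - of_rat \<epsilon>}"

lemma Pseq_Dv: "Pseq f p \<epsilon> = Dv (Af f p \<epsilon>) (Bf f p \<epsilon>)"
proof -
  have "bfam f p \<epsilon> = {- Af f p \<epsilon>, - Bf f p \<epsilon>}"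
    unfolding bfam_def Af_def Bf_def by (auto simp: not_le)
  then show ?thesis unfolding Pseq_def Dv_def by (intro ext) simp
qed

lemma Pseq_Dv': "Pseq f p \<epsilon> \<nu> = Dv (Af f p \<epsilon>) (Bf f p \<epsilon>) \<nu>"
  by (simp add: Pseq_Dv)

lemma ns_f:
  assumes "baire1 f" "\<epsilon> > 0"
  shows "\<And>P. closed P \<Longrightarrow> P \<noteq> {} \<Longrightarrow> \<exists>U. open U \<and> P \<inter> U \<noteq> {} \<and> (P \<inter> U \<inter> Af f p \<epsilon> = {} \<or> P \<inter> U \<inter> Bf f p \<epsilon> = {})"
proof -
  fix P :: "cantor set" assume "closed P" "P \<noteq> {}"
  have "of_rat p - of_rat \<epsilon> < (of_rat p + of_rat \<epsilon> :: real)" using assms(2) by simp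
  from nonstuck[OF assms(1) \<open>closed P\<close> \<open>P \<noteq> {}\<close> this]
  show "\<exists>U. open U \<and> P \<inter> U \<noteq> {} \<and> (P \<inter> U \<inter> Af f p \<epsilon> = {} \<or> P \<inter> U \<inter> Bf f p \<epsilon> = {})"
    unfolding Af_def Bf_def .
qed

locale ctx =
  fixes T :: "'o::wellorder itself"
  assumes unc: "uncountable (UNIV :: 'o set)"
begin

lemma countable_P:
  assumes "baire1 f" "\<epsilon> > 0" shows "countable {\<nu>::'o. Pseq f p \<epsilon> \<nu> \<noteq> {}}"
  unfolding Pseq_Dv by (rule Dv_countable[OF ns_f[OF assms]])

lemma ex_empty:
  assumes "baire1 f" "\<epsilon> > 0" shows "\<exists>\<nu>::'o. Pseq f p \<epsilon> \<nu> = {}"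
proof (rule ccontr)
  assume "\<not> ?thesis"
  then have "{\<nu>::'o. Pseq f p \<epsilon> \<nu> \<noteq> {}} = UNIV" by auto
  then have "countable (UNIV :: 'o set)" using countable_P[OF assms, of p] by simp
  then show False using unc by simp
qed

lemma al1: assumes "baire1 f" "\<epsilon> > 0" shows "Pseq f p \<epsilon> (alpha f p \<epsilon> :: 'o) = {}"
  unfolding alpha_def using ex_empty[OF assms] by (rule LeastI_ex)

lemma al2: assumes "baire1 f" "\<epsilon> > 0"
  shows "(\<nu> < (alpha f p \<epsilon> :: 'o)) \<longleftrightarrow> Pseq f p \<epsilon> \<nu> \<noteq> {}"
proof
  assume "\<nu> < alpha f p \<epsilon>" then show "Pseq f p \<epsilon> \<nu> \<noteq> {}"
    unfolding alpha_def by (rule not_less_Least)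
next
  assume a: "Pseq f p \<epsilon> \<nu> \<noteq> {}"
  show "\<nu> < alpha f p \<epsilon>"
  proof (rule ccontr)
    assume "\<not> \<nu> < alpha f p \<epsilon>"
    then have "alpha f p \<epsilon> \<le> \<nu>" by simp
    then have "Pseq f p \<epsilon> \<nu> \<subseteq> Pseq f p \<epsilon> (alpha f p \<epsilon> :: 'o)" unfolding Pseq_Dv' by (rule Dv_anti)
    then show False using a al1[OF assms] by blast
  qed
qed

lemma al3: assumes "baire1 f" "\<epsilon> > 0" shows "countable {\<nu>. \<nu> < (alpha f p \<epsilon> :: 'o)}"
  using countable_P[OF assms] al2[OF assms] by simp

lemma al4: assumes "baire1 f" "\<epsilon> > 0" shows "\<exists>\<mu>. is_succ_of \<mu> (alpha f p \<epsilon> :: 'o)"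
proof (rule ccontr)
  assume ns: "\<not> ?thesis"
  define a where "a = (alpha f p \<epsilon> :: 'o)"
  show False
  proof (cases "\<exists>\<mu>. \<mu> < a")
    case False
    then have "Pseq f p \<epsilon> a = UNIV" unfolding Pseq_Dv' by (rule Dv_bot)
    then show False using al1[OF assms, of p] a_def by simp
  next
    case True
    then obtain \<mu>0 where "\<mu>0 < a" by blast
    have "Dv (Af f p \<epsilon>) (Bf f p \<epsilon>) a \<inter> UNIV = {}" using al1[OF assms, of p] a_def by (simp add: Pseq_Dv')
    from Dv_limit_compact[OF ns[folded a_def] \<open>\<mu>0 < a\<close> closed_UNIV this]
    obtain \<mu> where "\<mu> < a" "Dv (Af f p \<epsilon>) (Bf f p \<epsilon>) \<mu> = {}" by auto
    then show False using al2[OF assms, of \<mu>] a_def by (simp add: Pseq_Dv')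
  qed
qed

lemma br_ex: assumes "baire1 f" shows "\<exists>b::'o. \<forall>p \<epsilon>. \<epsilon> > 0 \<longrightarrow> alpha f p \<epsilon> \<le> b"
proof -
  define S where "S = (\<Union>pe\<in>{pe::rat\<times>rat. snd pe > 0}. {\<nu>::'o. \<nu> < alpha f (fst pe) (snd pe)})"
  have "countable S" unfolding S_def
    by (rule countable_UN) (auto intro: al3[OF assms])
  then obtain b where "b \<notin> S" using unc
    by (metis UNIV_eq_I countable_def)
  have "\<forall>p \<epsilon>. \<epsilon> > 0 \<longrightarrow> alpha f p \<epsilon> \<le> b"
  proof (intro allI impI)
    fix p \<epsilon> :: rat assume "\<epsilon> > 0"
    then have "(p, \<epsilon>) \<in> {pe::rat\<times>rat. snd pe > 0}" by simp
    then have "\<not> b < alpha f p \<epsilon>" using \<open>b \<notin> S\<close> unfolding S_def by fastforce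
    then show "alpha f p \<epsilon> \<le> b" by simp
  qed
  then show ?thesis by blast
qed

lemma br1: assumes "baire1 f" "\<epsilon> > 0" shows "(alpha f p \<epsilon> :: 'o) \<le> brank f"
proof -
  have "\<forall>p \<epsilon>. \<epsilon> > 0 \<longrightarrow> (alpha f p \<epsilon> :: 'o) \<le> brank f"
    unfolding brank_def using br_ex[OF assms(1)] by (rule LeastI_ex)
  then show ?thesis using assms(2) by blast
qed

lemma br2: assumes "\<And>p \<epsilon>. \<epsilon> > 0 \<Longrightarrow> (alpha f p \<epsilon> :: 'o) \<le> \<nu>" shows "brank f \<le> \<nu>"
  unfolding brank_def using assms by (intro Least_le) blast

end




lemma ca_iff:
  "(\<forall>A b. correct_answer b (g (k A)) q \<delta> \<longrightarrow> correct_answer b (f A) p \<epsilon>) \<longleftrightarrow>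
   ((\<forall>x\<in>Af f p \<epsilon>. k x \<in> Af g q \<delta>) \<and> (\<forall>x\<in>Bf f p \<epsilon>. k x \<in> Bf g q \<delta>))"
proof -
  have "(\<forall>A b. correct_answer b (g (k A)) q \<delta> \<longrightarrow> correct_answer b (f A) p \<epsilon>) \<longleftrightarrow>
     (\<forall>A. (g (k A) < of_rat q + of_rat \<delta> \<longrightarrow> f A < of_rat p + of_rat \<epsilon>) \<and>
          (g (k A) > of_rat q - of_rat \<delta> \<longrightarrow> f A > of_rat p - of_rat \<epsilon>))"
    unfolding correct_answer_def by (metis (full_types))
  also have "\<dots> \<longleftrightarrow> ((\<forall>x\<in>Af f p \<epsilon>. k x \<in> Af g q \<delta>) \<and> (\<forall>x\<in>Bf f p \<epsilon>. k x \<in> Bf g q \<delta>))"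
    unfolding Af_def Bf_def by (auto simp: not_less[symmetric])
  finally show ?thesis .
qed

lemma mred_iff:
  "m_reducible f g \<longleftrightarrow> (\<forall>p \<epsilon>. \<epsilon> > 0 \<longrightarrow> (\<exists>q \<delta>. \<delta> > 0 \<and> red (Af f p \<epsilon>) (Bf f p \<epsilon>) (Af g q \<delta>) (Bf g q \<delta>) UNIV UNIV))"
  unfolding m_reducible_def red_def ca_iff by auto

lemma transfer:
  assumes "red A B C D UNIV UNIV"
  shows "Dv A B \<nu> \<inter> A \<noteq> {} \<Longrightarrow> Dv C D \<nu> \<inter> C \<noteq> {}" and "Dv A B \<nu> \<inter> B \<noteq> {} \<Longrightarrow> Dv C D \<nu> \<inter> D \<noteq> {}"
proof -
  obtain k where k: "continuous_on UNIV k" "\<forall>x\<in>A. k x \<in> C" "\<forall>x\<in>B. k x \<in> D"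
    using assms unfolding red_def by auto
  have sub: "Dv A B \<nu> \<subseteq> k -` Dv C D \<nu>" by (rule Dv_pullback) (use k in auto)
  show "Dv A B \<nu> \<inter> A \<noteq> {} \<Longrightarrow> Dv C D \<nu> \<inter> C \<noteq> {}" using sub k(2) by blast
  show "Dv A B \<nu> \<inter> B \<noteq> {} \<Longrightarrow> Dv C D \<nu> \<inter> D \<noteq> {}" using sub k(3) by blast
qed

context ctx begin

lemma lem_lt:
  assumes f: "baire1 f" and g: "baire1 g" and e: "\<epsilon> > 0" and lt: "(alpha f p \<epsilon> :: 'o) < brank g"
  shows "\<exists>q \<delta>. \<delta> > 0 \<and> red (Af f p \<epsilon>) (Bf f p \<epsilon>) (Af g q \<delta>) (Bf g q \<delta>) UNIV UNIV"
proof -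
  define \<nu> where "\<nu> = (alpha f p \<epsilon> :: 'o)"
  have "\<exists>q \<delta>. \<delta> > 0 \<and> \<nu> < (alpha g q \<delta> :: 'o)"
  proof (rule ccontr)
    assume na: "\<not> ?thesis"
    have "(alpha g q \<delta> :: 'o) \<le> \<nu>" if "\<delta> > 0" for q \<delta>
    proof -
      have "\<not> \<nu> < (alpha g q \<delta> :: 'o)" using na that by blast
      then show ?thesis by simp
    qed
    then have "brank g \<le> \<nu>" by (rule br2)
    then show False using lt \<nu>_def by simp
  qed
  then obtain q \<delta> where qd: "\<delta> > 0" "\<nu> < (alpha g q \<delta> :: 'o)" by blast
  then have "Pseq g q \<delta> \<nu> \<noteq> {}" using al2[OF g qd(1)] by blast
  then obtain y where y: "y \<in> Dv (Af g q \<delta>) (Bf g q \<delta>) \<nu>" by (auto simp: Pseq_Dv')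
  have "Dv (Af f p \<epsilon>) (Bf f p \<epsilon>) \<nu> \<inter> UNIV = {}" using al1[OF f e, of p] \<nu>_def by (simp add: Pseq_Dv')
  then have "red (Af f p \<epsilon>) (Bf f p \<epsilon>) (Af g q \<delta>) (Bf g q \<delta>) UNIV UNIV"
    by (rule M_lemma[OF open_UNIV closed_UNIV _ y open_UNIV UNIV_I])
  then show ?thesis using qd(1) by blast
qed

lemma e1:
  assumes h: "baire1 h" and e: "\<epsilon> > 0" and s: "is_succ_of \<nu> (brank h :: 'o)"
  shows "(alpha h p \<epsilon> :: 'o) = brank h \<longleftrightarrow> Pseq h p \<epsilon> \<nu> \<noteq> {}"
proof
  assume "(alpha h p \<epsilon> :: 'o) = brank h"
  then have "\<nu> < (alpha h p \<epsilon> :: 'o)" using s by (simp add: is_succ_of_def)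
  then show "Pseq h p \<epsilon> \<nu> \<noteq> {}" using al2[OF h e] by blast
next
  assume "Pseq h p \<epsilon> \<nu> \<noteq> {}"
  then have a: "\<nu> < (alpha h p \<epsilon> :: 'o)" using al2[OF h e] by blast
  have b: "(alpha h p \<epsilon> :: 'o) \<le> brank h" by (rule br1[OF h e])
  show "(alpha h p \<epsilon> :: 'o) = brank h"
  proof (rule ccontr)
    assume "(alpha h p \<epsilon> :: 'o) \<noteq> brank h"
    then have "(alpha h p \<epsilon> :: 'o) < brank h" using b by simp
    then have "(alpha h p \<epsilon> :: 'o) \<le> \<nu>" using s by (simp add: is_succ_of_def)
    then show False using a by simp
  qed
qed

lemma img_iff1: "h ` P - {of_rat p - of_rat \<epsilon> <..< of_rat p + of_rat \<epsilon>} \<noteq> {} \<longleftrightarrow> P \<inter> (Af h p \<epsilon> \<union> Bf h p \<epsilon>) \<noteq> {}"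
  unfolding Af_def Bf_def by (auto simp: not_less)

lemma img_iff2: "(\<not> h ` P \<subseteq> {of_rat p - of_rat \<epsilon> <..}) \<longleftrightarrow> P \<inter> Bf h p \<epsilon> \<noteq> {}"
  unfolding Bf_def by (auto simp: not_less)

lemma img_iff2': "h ` P \<subseteq> {of_rat p - of_rat \<epsilon> <..} \<longleftrightarrow> P \<inter> Bf h p \<epsilon> = {}"
  unfolding Bf_def by (auto simp: not_less)

lemma img_iff3': "h ` P \<subseteq> {..< of_rat p + of_rat \<epsilon>} \<longleftrightarrow> P \<inter> Af h p \<epsilon> = {}"
  unfolding Af_def by (auto simp: not_less)

lemma img_iff3: "(\<not> h ` P \<subseteq> {..< of_rat p + of_rat \<epsilon>}) \<longleftrightarrow> P \<inter> Af h p \<epsilon> \<noteq> {}"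
  unfolding Af_def by (auto simp: not_less)

lemma e2:
  assumes h: "baire1 h" and s: "is_succ_of \<nu> (brank h :: 'o)"
  shows "maximal_pair h (\<nu>'::'o) p \<epsilon> \<longleftrightarrow> \<nu>' = \<nu> \<and> \<epsilon> > 0 \<and> Pseq h p \<epsilon> \<nu> \<inter> (Af h p \<epsilon> \<union> Bf h p \<epsilon>) \<noteq> {}"
proof
  assume m: "maximal_pair h \<nu>' p \<epsilon>"
  then have "is_succ_of \<nu>' (brank h)" unfolding maximal_pair_def by blast
  then have "\<nu>' = \<nu>" using succ_unique s by blast
  then show "\<nu>' = \<nu> \<and> \<epsilon> > 0 \<and> Pseq h p \<epsilon> \<nu> \<inter> (Af h p \<epsilon> \<union> Bf h p \<epsilon>) \<noteq> {}"
    using m unfolding maximal_pair_def img_iff1 by blast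
next
  assume a: "\<nu>' = \<nu> \<and> \<epsilon> > 0 \<and> Pseq h p \<epsilon> \<nu> \<inter> (Af h p \<epsilon> \<union> Bf h p \<epsilon>) \<noteq> {}"
  then have "(alpha h p \<epsilon> :: 'o) = brank h" using e1[OF h _ s] by blast
  then show "maximal_pair h \<nu>' p \<epsilon>" using a s unfolding maximal_pair_def img_iff1 by blast
qed

lemma ts_iff:
  assumes h: "baire1 h" and s: "is_succ_of \<nu> (brank h :: 'o)"
  shows "two_sided TYPE('o) h \<longleftrightarrow> (\<exists>p \<epsilon>. \<epsilon> > 0 \<and> Pseq h p \<epsilon> \<nu> \<inter> Af h p \<epsilon> \<noteq> {} \<and> Pseq h p \<epsilon> \<nu> \<inter> Bf h p \<epsilon> \<noteq> {})"
  unfolding two_sided_def e2[OF h s] img_iff2 img_iff3 by blast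

lemma ls_iff:
  assumes h: "baire1 h" and s: "is_succ_of \<nu> (brank h :: 'o)"
  shows "left_sided TYPE('o) h \<longleftrightarrow> (\<forall>p \<epsilon>. \<epsilon> > 0 \<and> Pseq h p \<epsilon> \<nu> \<inter> (Af h p \<epsilon> \<union> Bf h p \<epsilon>) \<noteq> {} \<longrightarrow> Pseq h p \<epsilon> \<nu> \<inter> Af h p \<epsilon> = {})"
  unfolding left_sided_def e2[OF h s] img_iff3' by auto

lemma rs_iff:
  assumes h: "baire1 h" and s: "is_succ_of \<nu> (brank h :: 'o)"
  shows "right_sided TYPE('o) h \<longleftrightarrow> (\<forall>p \<epsilon>. \<epsilon> > 0 \<and> Pseq h p \<epsilon> \<nu> \<inter> (Af h p \<epsilon> \<union> Bf h p \<epsilon>) \<noteq> {} \<longrightarrow> Pseq h p \<epsilon> \<nu> \<inter> Bf h p \<epsilon> = {})"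
  unfolding right_sided_def e2[OF h s] img_iff2' by auto

lemma ex_top:
  assumes h: "baire1 h" and s: "is_succ_of \<nu> (brank h :: 'o)"
  shows "\<exists>q \<delta>. \<delta> > 0 \<and> Pseq h q \<delta> \<nu> \<noteq> {}"
proof (rule ccontr)
  assume "\<not> ?thesis"
  then have "\<And>q \<delta>. \<delta> > 0 \<Longrightarrow> (alpha h q \<delta> :: 'o) \<le> \<nu>" using al2[OF h] by (meson not_less)
  then have "brank h \<le> \<nu>" by (rule br2)
  then show False using s unfolding is_succ_of_def by (meson not_le)
qed

lemma ex_max:
  assumes h: "baire1 h" and s: "is_succ_of \<nu> (brank h :: 'o)"
  shows "\<exists>q \<delta>. \<delta> > 0 \<and> Pseq h q \<delta> \<nu> \<inter> (Af h q \<delta> \<union> Bf h q \<delta>) \<noteq> {}"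
proof -
  obtain q \<delta> where qd: "\<delta> > 0" "Pseq h q \<delta> \<nu> \<noteq> {}" using ex_top[OF h s] by blast
  then obtain y where y: "y \<in> Pseq h q \<delta> \<nu>" by blast
  show ?thesis
  proof (cases "y \<in> Af h q \<delta> \<union> Bf h q \<delta>")
    case True then show ?thesis using qd y by blast
  next
    case False
    then have yl: "of_rat q - of_rat \<delta> < h y" and yu: "h y < of_rat q + of_rat \<delta>"
      unfolding Af_def Bf_def by auto
    obtain r where r: "of_rat (q - \<delta>) < (of_rat r :: real)" "of_rat r < h y"
      using of_rat_dense[of "of_rat (q - \<delta>)" "h y"] yl by (auto simp: of_rat_diff)
    have rq: "q - \<delta> < r" using r(1) by (simp add: of_rat_less)
    define q' where "q' = (r + (q - \<delta>)) / 2"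
    define \<delta>' where "\<delta>' = (r - (q - \<delta>)) / 2"
    have d': "\<delta>' > 0" unfolding \<delta>'_def using rq by simp
    have up: "q' + \<delta>' = r" and lo: "q' - \<delta>' = q - \<delta>" unfolding q'_def \<delta>'_def by (simp_all add: field_simps)
    have upr: "of_rat q' + of_rat \<delta>' = (of_rat r :: real)" using up by (metis of_rat_add)
    have lor: "of_rat q' - of_rat \<delta>' = (of_rat q - of_rat \<delta> :: real)" using lo by (metis of_rat_diff)
    have AA: "Af h q \<delta> \<subseteq> Af h q' \<delta>'" unfolding Af_def upr using r yu by auto
    have BB: "Bf h q \<delta> \<subseteq> Bf h q' \<delta>'" unfolding Bf_def lor by auto
    have "Dv (Af h q \<delta>) (Bf h q \<delta>) \<nu> \<subseteq> id -` Dv (Af h q' \<delta>') (Bf h q' \<delta>') \<nu>"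
      by (rule Dv_pullback) (use AA BB in auto)
    then have "y \<in> Pseq h q' \<delta>' \<nu>" using y by (auto simp: Pseq_Dv')
    moreover have "y \<in> Af h q' \<delta>'" unfolding Af_def upr using r by simp
    ultimately show ?thesis using d' by blast
  qed
qed

end




context ctx begin

lemma loc_of_top:
  assumes h: "baire1 h" and e: "\<epsilon> > 0" and s: "is_succ_of \<nu> (alpha h p \<epsilon> :: 'o)"
  shows "\<And>x. x \<in> Dv (Af h p \<epsilon>) (Bf h p \<epsilon>) \<nu> \<Longrightarrow> \<exists>U. open U \<and> x \<in> U \<and>
     (Dv (Af h p \<epsilon>) (Bf h p \<epsilon>) \<nu> \<inter> U \<inter> Af h p \<epsilon> = {} \<or> Dv (Af h p \<epsilon>) (Bf h p \<epsilon>) \<nu> \<inter> U \<inter> Bf h p \<epsilon> = {})"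
proof -
  fix x assume x: "x \<in> Dv (Af h p \<epsilon>) (Bf h p \<epsilon>) \<nu>"
  have "dstep (Af h p \<epsilon>) (Bf h p \<epsilon>) (Dv (Af h p \<epsilon>) (Bf h p \<epsilon>) \<nu>) = {}"
    using al1[OF h e, of p] Dv_succ[OF s] by (simp add: Pseq_Dv')
  then have "x \<notin> dstep (Af h p \<epsilon>) (Bf h p \<epsilon>) (Dv (Af h p \<epsilon>) (Bf h p \<epsilon>) \<nu>)" by blast
  then show "\<exists>U. open U \<and> x \<in> U \<and>
     (Dv (Af h p \<epsilon>) (Bf h p \<epsilon>) \<nu> \<inter> U \<inter> Af h p \<epsilon> = {} \<or> Dv (Af h p \<epsilon>) (Bf h p \<epsilon>) \<nu> \<inter> U \<inter> Bf h p \<epsilon> = {})"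
    using x unfolding dstep_mem by blast
qed

lemma succ_case:
  assumes f: "baire1 f" and g: "baire1 g" and sf: "is_succ_of \<nu> (brank f :: 'o)" and eq: "(brank f :: 'o) = brank g"
  shows "m_reducible f g \<longleftrightarrow>
             two_sided TYPE('o) g
             \<or> (one_sided TYPE('o) f \<and> \<not> right_sided TYPE('o) g \<and> \<not> left_sided TYPE('o) g)
             \<or> (right_sided TYPE('o) f \<and> right_sided TYPE('o) g)
             \<or> (left_sided TYPE('o) f \<and> left_sided TYPE('o) g)"
proof -
  have sg: "is_succ_of \<nu> (brank g :: 'o)" using sf eq by simp
  note tsf = ts_iff[OF f sf] and tsg = ts_iff[OF g sg]
  note lsf = ls_iff[OF f sf] and lsg = ls_iff[OF g sg]
  note rsf = rs_iff[OF f sf] and rsg = rs_iff[OF g sg]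
  show ?thesis
  proof
    assume mr: "m_reducible f g"
    have tr: "\<exists>q \<delta>. \<delta> > 0 \<and> (Pseq f p \<epsilon> \<nu> \<inter> Af f p \<epsilon> \<noteq> {} \<longrightarrow> Pseq g q \<delta> \<nu> \<inter> Af g q \<delta> \<noteq> {})
         \<and> (Pseq f p \<epsilon> \<nu> \<inter> Bf f p \<epsilon> \<noteq> {} \<longrightarrow> Pseq g q \<delta> \<nu> \<inter> Bf g q \<delta> \<noteq> {})" if e: "\<epsilon> > 0" for p \<epsilon>
    proof -
      obtain q \<delta> where qd: "\<delta> > 0" "red (Af f p \<epsilon>) (Bf f p \<epsilon>) (Af g q \<delta>) (Bf g q \<delta>) UNIV UNIV"
        using mr e unfolding mred_iff by blast
      show ?thesis using transfer[OF qd(2)] qd(1) unfolding Pseq_Dv' by blast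
    qed
    show "two_sided TYPE('o) g
             \<or> (one_sided TYPE('o) f \<and> \<not> right_sided TYPE('o) g \<and> \<not> left_sided TYPE('o) g)
             \<or> (right_sided TYPE('o) f \<and> right_sided TYPE('o) g)
             \<or> (left_sided TYPE('o) f \<and> left_sided TYPE('o) g)"
    proof (cases "two_sided TYPE('o) g")
      case True then show ?thesis by blast
    next
      case False
      have nf: "\<not> two_sided TYPE('o) f"
      proof
        assume "two_sided TYPE('o) f"
        then obtain p \<epsilon> where pe: "\<epsilon> > 0" "Pseq f p \<epsilon> \<nu> \<inter> Af f p \<epsilon> \<noteq> {}" "Pseq f p \<epsilon> \<nu> \<inter> Bf f p \<epsilon> \<noteq> {}"
          using tsf by blast
        then show False using tr[OF pe(1), of p] False tsg by blast
      qed
      show ?thesis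
      proof (cases "right_sided TYPE('o) g")
        case True
        have "right_sided TYPE('o) f" unfolding rsf
        proof (intro allI impI)
          fix p \<epsilon> assume a: "\<epsilon> > 0 \<and> Pseq f p \<epsilon> \<nu> \<inter> (Af f p \<epsilon> \<union> Bf f p \<epsilon>) \<noteq> {}"
          show "Pseq f p \<epsilon> \<nu> \<inter> Bf f p \<epsilon> = {}"
          proof (rule ccontr)
            assume b: "Pseq f p \<epsilon> \<nu> \<inter> Bf f p \<epsilon> \<noteq> {}"
            obtain q \<delta> where "\<delta> > 0" "Pseq g q \<delta> \<nu> \<inter> Bf g q \<delta> \<noteq> {}" using tr[of \<epsilon> p] a b by blast
            then show False using True rsg by blast
          qed
        qed
        then show ?thesis using True by blast
      next
        case nr: False
        show ?thesis
        proof (cases "left_sided TYPE('o) g")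
          case True
          have "left_sided TYPE('o) f" unfolding lsf
          proof (intro allI impI)
            fix p \<epsilon> assume a: "\<epsilon> > 0 \<and> Pseq f p \<epsilon> \<nu> \<inter> (Af f p \<epsilon> \<union> Bf f p \<epsilon>) \<noteq> {}"
            show "Pseq f p \<epsilon> \<nu> \<inter> Af f p \<epsilon> = {}"
            proof (rule ccontr)
              assume b: "Pseq f p \<epsilon> \<nu> \<inter> Af f p \<epsilon> \<noteq> {}"
              obtain q \<delta> where "\<delta> > 0" "Pseq g q \<delta> \<nu> \<inter> Af g q \<delta> \<noteq> {}" using tr[of \<epsilon> p] a b by blast
              then show False using True lsg by blast
            qed
          qed
          then show ?thesis using True by blast
        next
          case False
          then show ?thesis using nr nf unfolding one_sided_def by blast
        qed
      qed
    qed
  next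
    assume R: "two_sided TYPE('o) g
             \<or> (one_sided TYPE('o) f \<and> \<not> right_sided TYPE('o) g \<and> \<not> left_sided TYPE('o) g)
             \<or> (right_sided TYPE('o) f \<and> right_sided TYPE('o) g)
             \<or> (left_sided TYPE('o) f \<and> left_sided TYPE('o) g)"
    show "m_reducible f g" unfolding mred_iff
    proof (intro allI impI)
      fix p \<epsilon> :: rat assume e: "\<epsilon> > 0"
      show "\<exists>q \<delta>. \<delta> > 0 \<and> red (Af f p \<epsilon>) (Bf f p \<epsilon>) (Af g q \<delta>) (Bf g q \<delta>) UNIV UNIV"
      proof (cases "(alpha f p \<epsilon> :: 'o) < brank g")
        case True then show ?thesis using lem_lt[OF f g e] by blast
      next
        case False
        then have af: "(alpha f p \<epsilon> :: 'o) = brank f" using br1[OF f e, of p] eq by simp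
        then have sa: "is_succ_of \<nu> (alpha f p \<epsilon> :: 'o)" using sf by simp
        define P where "P = Pseq f p \<epsilon> \<nu>"
        note loc = loc_of_top[OF f e sa]
        show ?thesis
        proof (cases "P \<inter> Af f p \<epsilon> \<noteq> {}")
          case PA: True
          show ?thesis
          proof (cases "P \<inter> Bf f p \<epsilon> \<noteq> {}")
            case PB: True
            have "two_sided TYPE('o) f" using tsf e PA PB P_def by blast
            then have "two_sided TYPE('o) g" using R rsf lsf e PA PB P_def unfolding one_sided_def by blast
            then obtain q \<delta> where qd: "\<delta> > 0" "Pseq g q \<delta> \<nu> \<inter> Af g q \<delta> \<noteq> {}" "Pseq g q \<delta> \<nu> \<inter> Bf g q \<delta> \<noteq> {}"
              using tsg by blast
            then obtain z1 z2 where z: "z1 \<in> Dv (Af g q \<delta>) (Bf g q \<delta>) \<nu>" "z1 \<in> Af g q \<delta>"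
              "z2 \<in> Dv (Af g q \<delta>) (Bf g q \<delta>) \<nu>" "z2 \<in> Bf g q \<delta>" by (auto simp: Pseq_Dv')
            have "red (Af f p \<epsilon>) (Bf f p \<epsilon>) (Af g q \<delta>) (Bf g q \<delta>) UNIV UNIV"
              by (rule Step_lemma[OF loc z]) 
            then show ?thesis using qd(1) by blast
          next
            case PB: False
            have "\<exists>q \<delta>. \<delta> > 0 \<and> Pseq g q \<delta> \<nu> \<inter> Af g q \<delta> \<noteq> {}"
            proof -
              consider "two_sided TYPE('o) g" | "\<not> left_sided TYPE('o) g" | "right_sided TYPE('o) f \<and> right_sided TYPE('o) g"
                | "left_sided TYPE('o) f \<and> left_sided TYPE('o) g" using R by blast
              then show ?thesis
              proof cases
                case 1 then show ?thesis using tsg by blast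
              next
                case 2 then show ?thesis using lsg by blast
              next
                case 3
                obtain q \<delta> where "\<delta> > 0" "Pseq g q \<delta> \<nu> \<inter> (Af g q \<delta> \<union> Bf g q \<delta>) \<noteq> {}" using ex_max[OF g sg] by blast
                then show ?thesis using 3 rsg by blast
              next
                case 4
                then have "P \<inter> Af f p \<epsilon> = {}" using lsf e PA P_def by blast
                then show ?thesis using PA by blast
              qed
            qed
            then obtain q \<delta> y where qd: "\<delta> > 0" "y \<in> Dv (Af g q \<delta>) (Bf g q \<delta>) \<nu>" "y \<in> Af g q \<delta>"
              by (auto simp: Pseq_Dv')
            have "red (Af f p \<epsilon>) (Bf f p \<epsilon>) (Af g q \<delta>) (Bf g q \<delta>) UNIV UNIV"
              by (rule N_lemma[OF qd(2)]) (use qd(3) PB P_def in \<open>auto simp: Pseq_Dv'\<close>)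
            then show ?thesis using qd(1) by blast
          qed
        next
          case PA: False
          show ?thesis
          proof (cases "P \<inter> Bf f p \<epsilon> \<noteq> {}")
            case PB: True
            have "\<exists>q \<delta>. \<delta> > 0 \<and> Pseq g q \<delta> \<nu> \<inter> Bf g q \<delta> \<noteq> {}"
            proof -
              consider "two_sided TYPE('o) g" | "\<not> right_sided TYPE('o) g" | "right_sided TYPE('o) f \<and> right_sided TYPE('o) g"
                | "left_sided TYPE('o) f \<and> left_sided TYPE('o) g" using R by blast
              then show ?thesis
              proof cases
                case 1 then show ?thesis using tsg by blast
              next
                case 2 then show ?thesis using rsg by blast
              next
                case 3
                then have "P \<inter> Bf f p \<epsilon> = {}" using rsf e PB P_def by blast
                then show ?thesis using PB by blast
              next
                case 4
                obtain q \<delta> where "\<delta> > 0" "Pseq g q \<delta> \<nu> \<inter> (Af g q \<delta> \<union> Bf g q \<delta>) \<noteq> {}" using ex_max[OF g sg] by blast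
                then show ?thesis using 4 lsg by blast
              qed
            qed
            then obtain q \<delta> y where qd: "\<delta> > 0" "y \<in> Dv (Af g q \<delta>) (Bf g q \<delta>) \<nu>" "y \<in> Bf g q \<delta>"
              by (auto simp: Pseq_Dv')
            have "red (Af f p \<epsilon>) (Bf f p \<epsilon>) (Af g q \<delta>) (Bf g q \<delta>) UNIV UNIV"
              by (rule N_lemma[OF qd(2)]) (use qd(3) PA P_def in \<open>auto simp: Pseq_Dv'\<close>)
            then show ?thesis using qd(1) by blast
          next
            case PB: False
            obtain q \<delta> where "\<delta> > 0" "Pseq g q \<delta> \<nu> \<noteq> {}" using ex_top[OF g sg] by blast
            then obtain y where qd: "\<delta> > 0" "y \<in> Dv (Af g q \<delta>) (Bf g q \<delta>) \<nu>" by (auto simp: Pseq_Dv')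
            have "red (Af f p \<epsilon>) (Bf f p \<epsilon>) (Af g q \<delta>) (Bf g q \<delta>) UNIV UNIV"
              by (rule N_lemma[OF qd(2)]) (use PA PB P_def in \<open>auto simp: Pseq_Dv'\<close>)
            then show ?thesis using qd(1) by blast
          qed
        qed
      qed
    qed
  qed
qed

lemma main:
  fixes f g :: "cantor \<Rightarrow> real"
  assumes f: "baire1 f" and g: "baire1 g"
  shows "((brank f :: 'o) < brank g \<longrightarrow> m_reducible f g) \<and>
         ((brank f :: 'o) = brank g \<longrightarrow>
            (m_reducible f g \<longleftrightarrow>
               is_limit (brank f :: 'o)
             \<or> two_sided TYPE('o) g
             \<or> (one_sided TYPE('o) f \<and> \<not> right_sided TYPE('o) g \<and> \<not> left_sided TYPE('o) g)
             \<or> (right_sided TYPE('o) f \<and> right_sided TYPE('o) g)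
             \<or> (left_sided TYPE('o) f \<and> left_sided TYPE('o) g)))"
proof (intro conjI impI)
  assume lt: "(brank f :: 'o) < brank g"
  show "m_reducible f g" unfolding mred_iff
  proof (intro allI impI)
    fix p \<epsilon> :: rat assume e: "\<epsilon> > 0"
    have "(alpha f p \<epsilon> :: 'o) < brank g" using br1[OF f e, of p] lt by simp
    then show "\<exists>q \<delta>. \<delta> > 0 \<and> red (Af f p \<epsilon>) (Bf f p \<epsilon>) (Af g q \<delta>) (Bf g q \<delta>) UNIV UNIV"
      by (rule lem_lt[OF f g e])
  qed
next
  assume eq: "(brank f :: 'o) = brank g"
  show "m_reducible f g \<longleftrightarrow>
               is_limit (brank f :: 'o)
             \<or> two_sided TYPE('o) g
             \<or> (one_sided TYPE('o) f \<and> \<not> right_sided TYPE('o) g \<and> \<not> left_sided TYPE('o) g)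
             \<or> (right_sided TYPE('o) f \<and> right_sided TYPE('o) g)
             \<or> (left_sided TYPE('o) f \<and> left_sided TYPE('o) g)"
  proof (cases "is_limit (brank f :: 'o)")
    case True
    have "m_reducible f g" unfolding mred_iff
    proof (intro allI impI)
      fix p \<epsilon> :: rat assume e: "\<epsilon> > 0"
      obtain \<mu> where mu: "is_succ_of \<mu> (alpha f p \<epsilon> :: 'o)" using al4[OF f e] by blast
      have "(alpha f p \<epsilon> :: 'o) \<noteq> brank f"
      proof
        assume "(alpha f p \<epsilon> :: 'o) = brank f"
        then have "is_succ_of \<mu> (brank f :: 'o)" using mu by simp
        then show False using True unfolding is_limit_def by blast
      qed
      then have "(alpha f p \<epsilon> :: 'o) < brank g" using br1[OF f e, of p] eq by simp
      then show "\<exists>q \<delta>. \<delta> > 0 \<and> red (Af f p \<epsilon>) (Bf f p \<epsilon>) (Af g q \<delta>) (Bf g q \<delta>) UNIV UNIV"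
        by (rule lem_lt[OF f g e])
    qed
    then show ?thesis using True by blast
  next
    case False
    have one: "(0::rat) < 1" by simp
    obtain \<mu> where mu: "is_succ_of \<mu> (alpha f 0 1 :: 'o)" using al4[OF f one] by blast
    then have "\<mu> < brank f" using br1[OF f one, of 0] unfolding is_succ_of_def by (meson less_le_trans)
    then obtain \<nu> where sf: "is_succ_of \<nu> (brank f :: 'o)" using False unfolding is_limit_def by blast
    show ?thesis using succ_case[OF f g sf eq] False by blast
  qed
qed

end



theorem mainTheorem2:
  fixes f g :: "cantor \<Rightarrow> real"
  assumes "uncountable (UNIV :: 'o::wellorder set)"
    and "baire1 f" and "baire1 g"
  shows "((brank f :: 'o) < brank g \<longrightarrow> m_reducible f g) \<and>
         ((brank f :: 'o) = brank g \<longrightarrow>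
            (m_reducible f g \<longleftrightarrow>
               is_limit (brank f :: 'o)
             \<or> two_sided TYPE('o) g
             \<or> (one_sided TYPE('o) f \<and> \<not> right_sided TYPE('o) g \<and> \<not> left_sided TYPE('o) g)
             \<or> (right_sided TYPE('o) f \<and> right_sided TYPE('o) g)
             \<or> (left_sided TYPE('o) f \<and> left_sided TYPE('o) g)))"
proof -
  interpret ctx "TYPE('o)" by unfold_locales (rule assms(1))
  show ?thesis by (rule main[OF assms(2,3)])
qed

end
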